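(* Let $n\ge2$, $\nu,\beta>0$, $\rho>1$, let $X_1,\ldots,X_n$ be i.i.d. $\mathrm{Pareto}(\nu,\beta)$ and $M_n\coloneqq\frac{\log X_{(n)}-\log X_{(1)}}{\log\rho}+1$. Then for $t<\beta\log\rho$, \[\mathbb{E}e^{tM_n}=(n-1)e^tB\!\left(1-\frac{t}{\beta\log\rho},\,n-1\right),\] so that \begin{align*} \mathbb{E}M_n&=1+\frac{\psi(n)+\gamma}{\beta\log\rho}\sim\frac{\log n}{\beta\log\rho},\\ \mathrm{Var}(M_n)&=\frac{\frac{\pi^2}{6}-\psi_1(n)}{\beta^2\log^2\rho}\sim\frac{\pi^2}{6\beta^2\log^2\rho},\\ \mathrm{Skew}(M_n)&=\frac{2\zeta(3)+\psi_2(n)}{\left[\frac{\pi^2}{6}-\psi_1(n)\right]^{3/2}}\sim\frac{12\sqrt6\,\zeta(3)}{\pi^3}, \end{align*} where the asymptotic results hold as $n\to\infty$.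
   Context: $\mathrm{Pareto}(\nu,\beta)$ has CDF $1-(\nu/x)^\beta$ for $x>\nu$. $B$ is the Beta function, $\psi$ the digamma function, $\psi_m=\psi^{(m)}$ the polygamma functions, $\gamma$ Euler's constant, $\zeta(3)=\sum_{k\ge1}k^{-3}$, and $\mathrm{Skew}(X)=\mathbb{E}[((X-\mathbb{E}X)/\sqrt{\mathrm{Var}(X)})^3]$. *)

theory Defs
  imports "HOL-Probability.Probability" "HOL-Library.Landau_Symbols"
begin

definition pareto_cdf :: "real \<Rightarrow> real \<Rightarrow> real \<Rightarrow> real" where
  "pareto_cdf \<nu> \<beta> x = (if \<nu> < x then 1 - (\<nu> / x) powr \<beta> else 0)"

definition zeta3 :: real where
  "zeta3 = (\<Sum>k. 1 / (real (Suc k)) ^ 3)"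

definition var_of :: "'a measure \<Rightarrow> ('a \<Rightarrow> real) \<Rightarrow> real" where
  "var_of M Y = (\<integral>\<omega>. (Y \<omega> - (\<integral>\<omega>'. Y \<omega>' \<partial>M))\<^sup>2 \<partial>M)"

definition skew_of :: "'a measure \<Rightarrow> ('a \<Rightarrow> real) \<Rightarrow> real" where
  "skew_of M Y = (\<integral>\<omega>. ((Y \<omega> - (\<integral>\<omega>'. Y \<omega>' \<partial>M)) / sqrt (var_of M Y)) ^ 3 \<partial>M)"

definition range_stat :: "real \<Rightarrow> nat \<Rightarrow> (nat \<Rightarrow> 'a \<Rightarrow> real) \<Rightarrow> 'a \<Rightarrow> real" where
  "range_stat \<rho> n Y \<omega> =
     (ln (Max ((\<lambda>i. Y i \<omega>) ` {..<n})) - ln (Min ((\<lambda>i. Y i \<omega>) ` {..<n}))) / ln \<rho> + 1"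

end

theory Submission
  imports Defs
begin


definition alt_sum :: "nat \<Rightarrow> (nat \<Rightarrow> real) \<Rightarrow> real" where
  "alt_sum m \<phi> = (\<Sum>i<m. (-1)^i * real (m choose Suc i) * \<phi> i)"

lemma alt_sum_Suc:
  "alt_sum (Suc m) \<phi> = alt_sum m \<phi> + alt_sum (Suc m) (\<lambda>i. real (Suc i) * \<phi> i) / real (Suc m)"
proof -
  have "alt_sum (Suc m) \<phi> = (\<Sum>i<Suc m. (-1)^i * real (m choose i) * \<phi> i)
        + (\<Sum>i<Suc m. (-1)^i * real (m choose Suc i) * \<phi> i)"
    unfolding alt_sum_def by (simp add: algebra_simps sum.distrib)
  also have "(\<Sum>i<Suc m. (-1)^i * real (m choose Suc i) * \<phi> i) = alt_sum m \<phi>"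
    unfolding alt_sum_def by simp
  also have "(\<Sum>i<Suc m. (-1)^i * real (m choose i) * \<phi> i)
      = alt_sum (Suc m) (\<lambda>i. real (Suc i) * \<phi> i) / real (Suc m)"
    unfolding alt_sum_def sum_divide_distrib
  proof (rule sum.cong[OF refl])
    fix i assume "i \<in> {..<Suc m}"
    have "real (Suc m) * real (m choose i) = real (Suc m choose Suc i) * real (Suc i)"
      using Suc_times_binomial_eq[of m i] by (metis of_nat_mult)
    then have "real (m choose i) = real (Suc m choose Suc i) * real (Suc i) / real (Suc m)"
      by (simp add: field_simps del: of_nat_Suc binomial_Suc_Suc)
    then show "(-1)^i * real (m choose i) * \<phi> i
       = (-1)^i * real (Suc m choose Suc i) * (real (Suc i) * \<phi> i) / real (Suc m)"
      by (simp del: binomial_Suc_Suc)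
  qed
  finally show ?thesis by simp
qed

lemma alt_sum_one: "m > 0 \<Longrightarrow> alt_sum m (\<lambda>_. 1) = 1"
proof -
  assume m: "m > 0"
  have "(\<Sum>i\<le>m. (-1)^i * real (m choose i)) = 0"
    using choose_alternating_sum[OF m] by simp
  also have "(\<Sum>i\<le>m. (-1)^i * real (m choose i)) = 1 + (\<Sum>i<m. (-1)^(Suc i) * real (m choose Suc i))"
    by (subst sum.atMost_shift) (simp add: lessThan_Suc_atMost)
  finally show ?thesis unfolding alt_sum_def by (simp add: sum_negf)
qed

definition S :: "nat \<Rightarrow> nat \<Rightarrow> real" where
  "S k m = alt_sum m (\<lambda>i. 1 / real (Suc i) ^ k)"

lemma S_Suc: "S (Suc k) (Suc m) = S (Suc k) m + S k (Suc m) / real (Suc m)"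
  unfolding S_def by (subst alt_sum_Suc) (simp del: of_nat_Suc)

lemma S0: "m > 0 \<Longrightarrow> S 0 m = 1"
  unfolding S_def using alt_sum_one by simp

lemma S_zero[simp]: "S k 0 = 0" by (simp add: S_def alt_sum_def)

lemma S1: "S 1 m = harm m"
proof (induction m)
  case (Suc m) then show ?case using S_Suc[of 0 m] S0[of "Suc m"] by (simp add: harm_Suc inverse_eq_divide)
qed (simp add: harm_def)

lemma var_alg: "d \<noteq> 0 \<Longrightarrow> 2 * (s2 + (h + d) * d) - (h + d)^2 - (2 * s2 - h^2) = (d::real)^2"
  by (simp add: power2_eq_square algebra_simps)

lemma skew_alg: "6 * (s3 + (s2 + (h + d) * d) * d) - 6 * (h + d) * (s2 + (h + d) * d) + 2 * (h + d)^3
   - (6 * s3 - 6 * h * s2 + 2 * h^3) = 2 * (d::real)^3"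
  by (simp add: power3_eq_cube algebra_simps)

lemma var_ident: "2 * S 2 m - (harm m)^2 = (\<Sum>i<m. 1 / real (Suc i) ^ 2)"
proof (induction m)
  case (Suc m)
  define d where "d = 1 / real (Suc m)"
  have h: "harm (Suc m) = harm m + d" by (simp add: harm_Suc d_def inverse_eq_divide)
  have "S 2 (Suc m) = S 2 m + (harm m + d) * d"
    using S_Suc[of 1 m] S1 h by (simp add: numeral_2_eq_2 d_def)
  then have "2 * S 2 (Suc m) - (harm (Suc m))^2 = (2 * S 2 m - (harm m)^2) + d^2"
    using var_alg[of d "S 2 m" "harm m"] h by (simp add: d_def)
  then show ?case using Suc by (simp add: d_def power_divide)
qed (simp add: harm_def)

lemma skew_ident: "6 * S 3 m - 6 * harm m * S 2 m + 2 * (harm m)^3 = 2 * (\<Sum>i<m. 1 / real (Suc i) ^ 3)"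
proof (induction m)
  case (Suc m)
  define d where "d = 1 / real (Suc m)"
  have h: "harm (Suc m) = harm m + d" by (simp add: harm_Suc d_def inverse_eq_divide)
  have a: "S 2 (Suc m) = S 2 m + (harm m + d) * d"
    using S_Suc[of 1 m] S1 h by (simp add: numeral_2_eq_2 d_def)
  have b: "S 3 (Suc m) = S 3 m + S 2 (Suc m) * d"
    using S_Suc[of 2 m] by (simp add: numeral_3_eq_3 numeral_2_eq_2 d_def)
  have "6 * S 3 (Suc m) - 6 * harm (Suc m) * S 2 (Suc m) + 2 * (harm (Suc m))^3
     = (6 * S 3 m - 6 * harm m * S 2 m + 2 * (harm m)^3) + 2 * d^3"
    unfolding b a h using skew_alg[of "S 3 m" "S 2 m" "harm m" d] by simp
  then show ?case using Suc by (simp add: d_def power_divide)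
qed (simp add: harm_def)

definition P :: "nat \<Rightarrow> real \<Rightarrow> real" where
  "P m s = alt_sum m (\<lambda>i. real (Suc i) / (real (Suc i) - s))"
definition T :: "nat \<Rightarrow> real \<Rightarrow> real" where
  "T m s = alt_sum m (\<lambda>i. 1 / (real (Suc i) - s))"

lemma P_T: "s < 1 \<Longrightarrow> P m s = S 0 m + s * T m s"
  unfolding P_def T_def S_def alt_sum_def
  by (simp add: sum_distrib_left sum.distrib[symmetric] field_simps)

lemma P_prod: assumes "s < 1" "m > 0" shows "P m s = (\<Prod>i<m. real (Suc i) / (real (Suc i) - s))"
  using assms(2) proof (induction m rule: nat_induct_non_zero)
  case 1 then show ?case by (simp add: P_def alt_sum_def)
next
  case (Suc m)
  have "T (Suc m) s = T m s + P (Suc m) s / real (Suc m)"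
    unfolding T_def P_def by (subst alt_sum_Suc) (simp del: of_nat_Suc)
  then have "P (Suc m) s = P m s + s * P (Suc m) s / real (Suc m)"
    using P_T[OF assms(1), of m] P_T[OF assms(1), of "Suc m"] S0[of m] S0[of "Suc m"] Suc.hyps
    by (simp add: field_simps)
  then have "P (Suc m) s * (real (Suc m) - s) = P m s * real (Suc m)"
    by (simp add: field_simps)
  moreover have "real (Suc m) - s > 0" using assms by simp
  ultimately have "P (Suc m) s = P m s * (real (Suc m) / (real (Suc m) - s))"
    by (simp add: field_simps)
  then show ?case using Suc by simp
qed

lemma Beta_prod:
  fixes s :: real
  assumes "s < 1" "m > 0"
  shows "real m * Beta (1 - s) (real m) = (\<Prod>i<m. real (Suc i) / (real (Suc i) - s))"
  using assms(2)
proof (induction m rule: nat_induct_non_zero)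
  case 1
  have "Gamma (1 - s + 1) = (1 - s) * Gamma (1 - s)"
    using assms(1) by (intro Gamma_plus1) (auto elim!: nonpos_Ints_cases)
  moreover have "Gamma (1 - s) > 0" using assms by simp
  moreover have "1 - s \<noteq> 0" "Gamma (1 - s + 1) > 0" using assms by auto
  ultimately show ?case by (simp add: Beta_def field_simps)
next
  case (Suc m)
  have pos: "1 - s + real m > 0" using assms by simp
  have "Gamma (1 - s + real m + 1) = (1 - s + real m) * Gamma (1 - s + real m)"
    using pos by (intro Gamma_plus1) (auto elim!: nonpos_Ints_cases)
  moreover have "Gamma (real m + 1) = real m * Gamma (real m)"
    using Suc by (intro Gamma_plus1) (auto elim!: nonpos_Ints_cases)
  moreover have "Gamma (1 - s + real m) > 0" "Gamma (real m) > 0" "Gamma (1 - s) > 0"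
    using pos Suc assms by auto
  ultimately have "Beta (1 - s) (real m + 1) = Beta (1 - s) (real m) * (real m / (1 - s + real m))"
    unfolding Beta_def using pos by (simp add: field_simps add_ac)
  then have "real (Suc m) * Beta (1 - s) (real (Suc m))
     = real m * Beta (1 - s) (real m) * (real (Suc m) / (real (Suc m) - s))"
    by (simp add: field_simps add_ac)
  then show ?case using Suc by simp
qed


definition g :: "nat \<Rightarrow> real \<Rightarrow> real" where
  "g m w = (if 0 \<le> w then real m * exp (- w) * (1 - exp (- w)) ^ (m - 1) else 0)"

lemma g_nonneg: "0 \<le> g m w"
  unfolding g_def by (auto intro!: mult_nonneg_nonneg zero_le_power)

lemma g_measurable[measurable]: "g m \<in> borel_measurable borel"
  unfolding g_def by measurable

lemma g_sum:
  assumes "m > 0"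
  shows "g m w = (\<Sum>i<m. (-1)^i * real (m choose Suc i) * exponential_density (real (Suc i)) w)"
proof (cases "0 \<le> w")
  case False then show ?thesis by (simp add: g_def exponential_density_def)
next
  case True
  obtain m' where m: "m = Suc m'" using assms by (cases m) auto
  have "(\<Sum>i<m. (-1)^i * real (m choose Suc i) * exponential_density (real (Suc i)) w)
      = (\<Sum>i\<le>m'. real m * exp (- w) * (real (m' choose i) * (- exp (- w)) ^ i * 1 ^ (m' - i)))"
    unfolding m lessThan_Suc_atMost
  proof (rule sum.cong[OF refl])
    fix i assume "i \<in> {..m'}"
    have c: "real (Suc m' choose Suc i) * real (Suc i) = real (Suc m') * real (m' choose i)"
      using Suc_times_binomial_eq[of m' i] by (metis of_nat_mult)
    have e: "exp (- w * real (Suc i)) = exp (- w) * exp (- w) ^ i"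
      by (simp only: exp_of_nat_mult[symmetric] mult_exp_exp) (simp add: algebra_simps)
    have "(-1)^i * real (Suc m' choose Suc i) * exponential_density (real (Suc i)) w
        = (-1)^i * exp (- w) * exp (- w) ^ i * (real (Suc m' choose Suc i) * real (Suc i))"
      using True unfolding exponential_density_def e by (simp add: mult_ac del: of_nat_Suc binomial_Suc_Suc)
    also have "\<dots> = (-1)^i * exp (- w) * exp (- w) ^ i * (real (Suc m') * real (m' choose i))"
      by (simp only: c)
    also have "\<dots> = real (Suc m') * exp (- w) * (real (m' choose i) * (- exp (- w)) ^ i * 1 ^ (m' - i))"
      by (simp only: power_minus[of "exp (- w)" i] power_one mult_1_right mult.assoc mult.commute mult.left_commute)
    finally show "(-1)^i * real (Suc m' choose Suc i) * exponential_density (real (Suc i)) w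
        = real (Suc m') * exp (- w) * (real (m' choose i) * (- exp (- w)) ^ i * 1 ^ (m' - i))" .
  qed
  also have "\<dots> = real m * exp (- w) * (- exp (- w) + 1) ^ m'"
    by (subst binomial_ring[of "- exp (- w)" 1 m']) (simp add: sum_distrib_left)
  finally show ?thesis using True m by (simp add: g_def)
qed

lemma expd_moment:
  assumes "l > 0"
  shows "has_bochner_integral lborel (\<lambda>x. exponential_density l x * x ^ k) (fact k / l ^ k)"
proof (rule has_bochner_integral_nn_integral)
  show "(\<integral>\<^sup>+ x. ennreal (exponential_density l x * x ^ k) \<partial>lborel) = ennreal (fact k / l ^ k)"
    using nn_integral_erlang_ith_moment[OF assms, of 0 k] by simp
  show "AE x in lborel. 0 \<le> exponential_density l x * x ^ k"
    using assms by (auto simp: exponential_density_def)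
qed (use assms in auto)

lemma expd_mgf:
  assumes "s < l"
  shows "has_bochner_integral lborel (\<lambda>x. exponential_density l x * exp (s * x)) (l / (l - s))"
proof -
  have ne: "l - s \<noteq> 0" using assms by simp
  have eq: "exponential_density l x * exp (s * x) = l / (l - s) * exponential_density (l - s) x" for x
  proof -
    have "exp (- x * l) * exp (s * x) = exp (- x * (l - s))" by (simp add: mult_exp_exp algebra_simps)
    then show ?thesis using ne by (auto simp: exponential_density_def)
  qed
  have "has_bochner_integral lborel (\<lambda>x. exponential_density (l - s) x * x ^ 0) (fact 0 / (l - s) ^ 0)"
    using assms by (intro expd_moment) auto
  then have "has_bochner_integral lborel (\<lambda>x. l / (l - s) * exponential_density (l - s) x) (l / (l - s) * 1)"
    by (intro has_bochner_integral_mult_right) simp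
  then show ?thesis unfolding eq by simp
qed

lemma g_integral:
  assumes "m > 0"
    and h: "\<And>i. i < m \<Longrightarrow> has_bochner_integral lborel (\<lambda>x. exponential_density (real (Suc i)) x * f x) (I i)"
  shows "has_bochner_integral lborel (\<lambda>x. g m x * f x) (\<Sum>i<m. (-1)^i * real (m choose Suc i) * I i)"
proof -
  have "has_bochner_integral lborel (\<lambda>x. \<Sum>i<m. (-1)^i * real (m choose Suc i) * (exponential_density (real (Suc i)) x * f x))
      (\<Sum>i<m. (-1)^i * real (m choose Suc i) * I i)"
    by (intro has_bochner_integral_sum has_bochner_integral_mult_right h) auto
  moreover have "(\<lambda>x. \<Sum>i<m. (-1)^i * real (m choose Suc i) * (exponential_density (real (Suc i)) x * f x))
      = (\<lambda>x. g m x * f x)"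
    by (auto simp: g_sum[OF assms(1)] sum_distrib_right mult.assoc)
  ultimately show ?thesis by simp
qed

lemma g_moment:
  assumes "m > 0"
  shows "has_bochner_integral lborel (\<lambda>x. g m x * x ^ k) (fact k * S k m)"
proof -
  have "has_bochner_integral lborel (\<lambda>x. g m x * x ^ k) (\<Sum>i<m. (-1)^i * real (m choose Suc i) * (fact k / real (Suc i) ^ k))"
    by (rule g_integral[OF assms]) (intro expd_moment, simp)
  also have "(\<Sum>i<m. (-1)^i * real (m choose Suc i) * (fact k / real (Suc i) ^ k)) = fact k * S k m"
    unfolding S_def alt_sum_def by (simp add: sum_distrib_left algebra_simps)
  finally show ?thesis .
qed

lemma g_mgf:
  assumes "m > 0" "s < 1"
  shows "has_bochner_integral lborel (\<lambda>x. g m x * exp (s * x)) (P m s)"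
proof -
  have "has_bochner_integral lborel (\<lambda>x. g m x * exp (s * x)) (\<Sum>i<m. (-1)^i * real (m choose Suc i) * (real (Suc i) / (real (Suc i) - s)))"
    by (rule g_integral[OF assms(1)]) (intro expd_mgf, use assms(2) in simp)
  then show ?thesis unfolding P_def alt_sum_def .
qed

lemma g_cdf_nn:
  assumes "m > 0"
  shows "(\<integral>\<^sup>+ t. ennreal (g m t) * indicator {..x} t \<partial>lborel) = (if 0 \<le> x then (1 - exp (- x)) ^ m else 0)"
proof (cases "0 \<le> x")
  case False
  then have "(\<integral>\<^sup>+ t. ennreal (g m t) * indicator {..x} t \<partial>lborel) = (\<integral>\<^sup>+ t. 0 \<partial>(lborel::real measure))"
    by (intro nn_integral_cong) (auto simp: g_def indicator_def)
  then show ?thesis using False by simp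
next
  case True
  define f where "f t = real m * exp (- t) * (1 - exp (- t)) ^ (m - 1)" for t
  have "(\<integral>\<^sup>+ t. ennreal (g m t) * indicator {..x} t \<partial>lborel) = (\<integral>\<^sup>+ t. ennreal (f t) * indicator {0..x} t \<partial>lborel)"
    by (intro nn_integral_cong) (auto simp: g_def f_def indicator_def)
  also have "\<dots> = ennreal ((1 - exp (- x)) ^ m - (1 - exp (- 0)) ^ m)"
  proof (rule nn_integral_FTC_Icc)
    show "f \<in> borel_measurable borel" unfolding f_def by measurable
    fix t :: real
    show "DERIV (\<lambda>t. (1 - exp (- t)) ^ m) t :> f t"
      unfolding f_def using assms
      by (auto intro!: derivative_eq_intros)
    show "0 \<le> f t" if "t \<in> {0..x}" using that unfolding f_def by (auto intro!: mult_nonneg_nonneg zero_le_power)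
  qed (use True in auto)
  finally show ?thesis using True assms by simp
qed

lemma g_total_nn:
  assumes "m > 0"
  shows "(\<integral>\<^sup>+ t. ennreal (g m t) \<partial>lborel) = 1"
proof -
  define f where "f t = real m * exp (- t) * (1 - exp (- t)) ^ (m - 1)" for t
  have "(\<integral>\<^sup>+ t. ennreal (g m t) \<partial>lborel) = (\<integral>\<^sup>+ t. ennreal (f t) * indicator {0..} t \<partial>lborel)"
    by (intro nn_integral_cong) (auto simp: g_def f_def indicator_def)
  also have "\<dots> = ennreal (1 - (1 - exp (- 0)) ^ m)"
  proof (rule nn_integral_FTC_atLeast)
    show "f \<in> borel_measurable borel" unfolding f_def by measurable
    fix t :: real
    show "DERIV (\<lambda>t. (1 - exp (- t)) ^ m) t :> f t"
      unfolding f_def using assms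
      by (auto intro!: derivative_eq_intros)
    show "0 \<le> f t" if "0 \<le> t" using that unfolding f_def by (auto intro!: mult_nonneg_nonneg zero_le_power)
    have "((\<lambda>t::real. exp (- t)) \<longlongrightarrow> 0) at_top"
      by (rule filterlim_compose[OF exp_at_bot filterlim_uminus_at_bot_at_top])
    then have "((\<lambda>t::real. (1 - exp (- t)) ^ m) \<longlongrightarrow> (1 - 0) ^ m) at_top"
      by (rule tendsto_power[OF tendsto_diff[OF tendsto_const]])
    then show "((\<lambda>t::real. (1 - exp (- t)) ^ m) \<longlongrightarrow> 1) at_top" by simp
  qed
  finally show ?thesis using assms by simp
qed

lemma real_distribution_g:
  assumes "m > 0"
  shows "real_distribution (density lborel (g m))"
proof -
  have "prob_space (density lborel (g m))"
    by (rule prob_spaceI) (simp add: emeasure_density g_total_nn[OF assms])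
  moreover have "sets (density lborel (g m)) = sets borel" by simp
  ultimately show ?thesis by (simp add: real_distribution_def real_distribution_axioms_def)
qed

lemma cdf_g:
  assumes "m > 0"
  shows "cdf (density lborel (g m)) x = (if 0 \<le> x then (1 - exp (- x)) ^ m else 0)"
proof -
  have "emeasure (density lborel (g m)) {..x} = (if 0 \<le> x then (1 - exp (- x)) ^ m else 0)"
    by (simp add: emeasure_density g_cdf_nn[OF assms])
  then show ?thesis unfolding cdf_def measure_def by (auto intro!: zero_le_power)
qed


definition pd :: "real \<Rightarrow> real \<Rightarrow> real \<Rightarrow> real" where
  "pd \<nu> a x = (if \<nu> < x then a * \<nu> powr a * x powr (- a - 1) else 0)"

lemma pd_nonneg: "0 < a \<Longrightarrow> 0 \<le> pd \<nu> a x"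
  unfolding pd_def by auto

lemma pd_measurable[measurable]: "pd \<nu> a \<in> borel_measurable borel"
  unfolding pd_def by measurable

lemma pd_deriv:
  fixes t \<nu> a :: real
  assumes "0 < t"
  shows "DERIV (\<lambda>t. - (\<nu> powr a * t powr (- a))) t :> a * \<nu> powr a * t powr (- a - 1)"
proof -
  have "DERIV (\<lambda>t. t powr (- a)) t :> (- a) * t powr (- a - 1)"
    using has_real_derivative_powr[of t "- a"] assms by simp
  then have "DERIV (\<lambda>t. - (\<nu> powr a * t powr (- a))) t :> - (\<nu> powr a * ((- a) * t powr (- a - 1)))"
    by (intro DERIV_minus DERIV_cmult)
  then show ?thesis by (simp add: algebra_simps)
qed

lemma pd_cdf_nn:
  assumes "0 < \<nu>" "0 < a"
  shows "(\<integral>\<^sup>+ t. ennreal (pd \<nu> a t) * indicator {..x} t \<partial>lborel) = ennreal (pareto_cdf \<nu> a x)"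
proof (cases "\<nu> < x")
  case False
  then have "(\<integral>\<^sup>+ t. ennreal (pd \<nu> a t) * indicator {..x} t \<partial>lborel) = (\<integral>\<^sup>+ t. 0 \<partial>(lborel::real measure))"
    by (intro nn_integral_cong) (auto simp: pd_def indicator_def)
  then show ?thesis using False by (simp add: pareto_cdf_def)
next
  case True
  define f where "f t = a * \<nu> powr a * t powr (- a - 1)" for t
  have "(\<integral>\<^sup>+ t. ennreal (pd \<nu> a t) * indicator {..x} t \<partial>lborel) = (\<integral>\<^sup>+ t. ennreal (f t) * indicator {\<nu>..x} t \<partial>lborel)"
    using AE_lborel_singleton[of \<nu>]
    by (intro nn_integral_cong_AE) (auto simp: pd_def f_def indicator_def elim!: eventually_mono)
  also have "\<dots> = ennreal (- (\<nu> powr a * x powr (- a)) - - (\<nu> powr a * \<nu> powr (- a)))"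
  proof (rule nn_integral_FTC_Icc)
    show "f \<in> borel_measurable borel" unfolding f_def by measurable
    fix t :: real
    assume t: "t \<in> {\<nu>..x}"
    then show "DERIV (\<lambda>t. - (\<nu> powr a * t powr (- a))) t :> f t"
      unfolding f_def using assms by (intro pd_deriv) auto
    show "0 \<le> f t" unfolding f_def using assms by auto
  qed (use True in auto)
  also have "- (\<nu> powr a * x powr (- a)) - - (\<nu> powr a * \<nu> powr (- a)) = pareto_cdf \<nu> a x"
    using True assms by (simp add: pareto_cdf_def powr_divide powr_minus_divide powr_add[symmetric])
  finally show ?thesis .
qed

lemma pd_total_nn:
  assumes "0 < \<nu>" "0 < a"
  shows "(\<integral>\<^sup>+ t. ennreal (pd \<nu> a t) \<partial>lborel) = 1"
proof -
  define f where "f t = a * \<nu> powr a * t powr (- a - 1)" for t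
  have "(\<integral>\<^sup>+ t. ennreal (pd \<nu> a t) \<partial>lborel) = (\<integral>\<^sup>+ t. ennreal (f t) * indicator {\<nu>..} t \<partial>lborel)"
    using AE_lborel_singleton[of \<nu>]
    by (intro nn_integral_cong_AE) (auto simp: pd_def f_def indicator_def elim!: eventually_mono)
  also have "\<dots> = ennreal (0 - - (\<nu> powr a * \<nu> powr (- a)))"
  proof (rule nn_integral_FTC_atLeast[where F="\<lambda>t. - (\<nu> powr a * t powr (- a))"])
    show "f \<in> borel_measurable borel" unfolding f_def by measurable
    fix t :: real
    assume t: "\<nu> \<le> t"
    then show "DERIV (\<lambda>t. - (\<nu> powr a * t powr (- a))) t :> f t"
      unfolding f_def using assms by (intro pd_deriv) auto
    show "0 \<le> f t" unfolding f_def using assms by auto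
  next
    have "((\<lambda>t::real. t powr (- a)) \<longlongrightarrow> 0) at_top"
      using assms by (intro tendsto_neg_powr filterlim_ident) auto
    then have "((\<lambda>t::real. - (\<nu> powr a * t powr (- a))) \<longlongrightarrow> - (\<nu> powr a * 0)) at_top"
      by (intro tendsto_minus tendsto_mult_left)
    then show "((\<lambda>t::real. - (\<nu> powr a * t powr (- a))) \<longlongrightarrow> 0) at_top" by simp
  qed
  also have "0 - - (\<nu> powr a * \<nu> powr (- a)) = 1"
    using assms by (simp add: powr_add[symmetric])
  finally show ?thesis by simp
qed

lemma real_distribution_pd:
  assumes "0 < \<nu>" "0 < a"
  shows "real_distribution (density lborel (pd \<nu> a))"
proof -
  have "prob_space (density lborel (pd \<nu> a))"
    by (rule prob_spaceI) (simp add: emeasure_density pd_total_nn[OF assms])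
  moreover have "sets (density lborel (pd \<nu> a)) = sets borel" by simp
  ultimately show ?thesis by (simp add: real_distribution_def real_distribution_axioms_def)
qed

lemma cdf_pd:
  assumes "0 < \<nu>" "0 < a"
  shows "cdf (density lborel (pd \<nu> a)) x = pareto_cdf \<nu> a x"
proof -
  have "emeasure (density lborel (pd \<nu> a)) {..x} = pareto_cdf \<nu> a x"
    by (simp add: emeasure_density pd_cdf_nn[OF assms])
  moreover have "0 \<le> pareto_cdf \<nu> a x"
  proof (cases "\<nu> < x")
    case True
    then have "\<nu> powr a \<le> x powr a" using assms by (intro powr_mono2) auto
    then show ?thesis using True assms by (auto simp: pareto_cdf_def powr_divide divide_le_eq_1)
  qed (simp add: pareto_cdf_def)
  ultimately show ?thesis unfolding cdf_def measure_def by simp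
qed

lemma pd_singleton: "emeasure (density lborel (pd \<nu> a)) {y} = 0"
proof -
  have "emeasure (density lborel (pd \<nu> a)) {y} = (\<integral>\<^sup>+ t. ennreal (pd \<nu> a t) * indicator {y} t \<partial>lborel)"
    by (simp add: emeasure_density)
  also have "\<dots> = (\<integral>\<^sup>+ t. 0 \<partial>(lborel::real measure))"
    using AE_lborel_singleton[of y]
    by (intro nn_integral_cong_AE) (auto simp: indicator_def elim!: eventually_mono)
  finally show ?thesis by simp
qed

lemma pd_power:
  assumes "0 < \<nu>" "0 < a"
  shows "(\<integral>\<^sup>+ t. ennreal (pd \<nu> a t) * ennreal ((\<nu> / t) powr (a * real m)) \<partial>lborel) = ennreal (1 / real (Suc m))"
proof -
  have eq: "ennreal (pd \<nu> a t) * ennreal ((\<nu> / t) powr (a * real m)) = ennreal (1 / real (Suc m)) * ennreal (pd \<nu> (a * real (Suc m)) t)" for t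
  proof (cases "\<nu> < t")
    case True
    then have t: "0 < t" using assms by simp
    have "(\<nu> / t) powr (a * real m) * (a * \<nu> powr a * t powr (- a - 1))
        = a * (exp (a * real m * (ln \<nu> - ln t)) * exp (a * ln \<nu>) * exp ((- a - 1) * ln t))"
      using t assms by (simp add: powr_def ln_div)
    also have "exp (a * real m * (ln \<nu> - ln t)) * exp (a * ln \<nu>) * exp ((- a - 1) * ln t)
       = exp ((a * real (Suc m)) * ln \<nu>) * exp ((- (a * real (Suc m)) - 1) * ln t)"
      by (simp only: mult_exp_exp) (rule arg_cong[where f=exp], simp add: algebra_simps)
    also have "a * \<dots> = 1 / real (Suc m) * (a * real (Suc m) * \<nu> powr (a * real (Suc m)) * t powr (- (a * real (Suc m)) - 1))"
      using t assms by (simp add: powr_def del: of_nat_Suc)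
    finally show ?thesis
      using True assms by (simp add: pd_def ennreal_mult'[symmetric] mult.commute del: of_nat_Suc)
  qed (simp add: pd_def)
  have "(\<integral>\<^sup>+ t. ennreal (pd \<nu> a t) * ennreal ((\<nu> / t) powr (a * real m)) \<partial>lborel)
      = ennreal (1 / real (Suc m)) * (\<integral>\<^sup>+ t. ennreal (pd \<nu> (a * real (Suc m)) t) \<partial>lborel)"
    unfolding eq by (rule nn_integral_cmult) simp
  also have "\<dots> = ennreal (1 / real (Suc m))"
    using assms by (subst pd_total_nn) auto
  finally show ?thesis .
qed


lemma range_nonneg:
  fixes x :: "nat \<Rightarrow> real"
  assumes "0 < n" "\<forall>i<n. 0 < x i" "0 < \<beta>"
  shows "0 \<le> \<beta> * (ln (Max (x ` {..<n})) - ln (Min (x ` {..<n})))"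
proof -
  have ne: "x ` {..<n} \<noteq> {}" using assms by auto
  have "Min (x ` {..<n}) \<in> x ` {..<n}" using ne by (intro Min_in) auto
  then have pos: "0 < Min (x ` {..<n})" using assms by auto
  have "Min (x ` {..<n}) \<le> x 0" using assms by (intro Min_le) auto
  moreover have "x 0 \<le> Max (x ` {..<n})" using assms by (intro Max_ge) auto
  ultimately have "Min (x ` {..<n}) \<le> Max (x ` {..<n})" by linarith
  then have "ln (Min (x ` {..<n})) \<le> ln (Max (x ` {..<n}))" using pos by simp
  then show ?thesis using assms by simp
qed

lemma range_char:
  fixes x :: "nat \<Rightarrow> real"
  assumes "0 < n" "\<forall>i<n. 0 < x i" "0 < \<beta>"
  shows "\<beta> * (ln (Max (x ` {..<n})) - ln (Min (x ` {..<n}))) \<le> r \<longleftrightarrow>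
    (\<exists>j<n. (\<forall>i<j. x j < x i) \<and> (\<forall>i<n. j < i \<longrightarrow> x j \<le> x i) \<and> (\<forall>i<n. x i \<le> exp (r / \<beta>) * x j))"
proof -
  define Mx where "Mx = Max (x ` {..<n})"
  define Mn where "Mn = Min (x ` {..<n})"
  define k where "k = exp (r / \<beta>)"
  have ne: "x ` {..<n} \<noteq> {}" using assms by auto
  have "Mn \<in> x ` {..<n}" unfolding Mn_def using ne by (intro Min_in) auto
  then have pos: "0 < Mn" using assms by auto
  have MnI: "Mn \<le> x i" if "i < n" for i unfolding Mn_def using that by (intro Min_le) auto
  have "Mn \<le> x 0" unfolding Mn_def using assms by (intro Min_le) auto
  moreover have "x 0 \<le> Mx" unfolding Mx_def using assms by (intro Max_ge) auto
  ultimately have "Mn \<le> Mx" by linarith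
  then have posx: "0 < Mx" using pos by simp
  have "\<beta> * (ln Mx - ln Mn) \<le> r \<longleftrightarrow> ln Mx \<le> r / \<beta> + ln Mn"
    using assms by (simp add: field_simps)
  also have "\<dots> \<longleftrightarrow> ln Mx \<le> ln (k * Mn)"
    using pos by (simp add: k_def ln_mult)
  also have "\<dots> \<longleftrightarrow> Mx \<le> k * Mn"
    using pos posx by (simp add: k_def)
  also have "\<dots> \<longleftrightarrow> (\<forall>i<n. x i \<le> k * Mn)"
    unfolding Mx_def using ne by (subst Max_le_iff) auto
  also have "\<dots> \<longleftrightarrow> (\<exists>j<n. (\<forall>i<j. x j < x i) \<and> (\<forall>i<n. j < i \<longrightarrow> x j \<le> x i) \<and> (\<forall>i<n. x i \<le> k * x j))"
  proof
    assume H: "\<forall>i<n. x i \<le> k * Mn"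
    obtain j0 where j0: "j0 < n" "x j0 = Mn" using \<open>Mn \<in> x ` {..<n}\<close> by auto
    define j where "j = (LEAST j. j < n \<and> x j = Mn)"
    have j: "j < n" "x j = Mn" unfolding j_def using j0 by (metis (mono_tags, lifting) LeastI)+
    have "\<forall>i<j. x j < x i"
    proof (intro allI impI)
      fix i assume "i < j"
      then have "i < n" "\<not> (i < n \<and> x i = Mn)" using j not_less_Least[of i "\<lambda>j. j < n \<and> x j = Mn"]
        unfolding j_def by auto
      then show "x j < x i" using MnI[of i] j by auto
    qed
    moreover have "\<forall>i<n. j < i \<longrightarrow> x j \<le> x i" using MnI j by auto
    moreover have "\<forall>i<n. x i \<le> k * x j" using H j by auto
    ultimately show "\<exists>j<n. (\<forall>i<j. x j < x i) \<and> (\<forall>i<n. j < i \<longrightarrow> x j \<le> x i) \<and> (\<forall>i<n. x i \<le> k * x j)"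
      using j by blast
  next
    assume "\<exists>j<n. (\<forall>i<j. x j < x i) \<and> (\<forall>i<n. j < i \<longrightarrow> x j \<le> x i) \<and> (\<forall>i<n. x i \<le> k * x j)"
    then obtain j where j: "j < n" "\<forall>i<j. x j < x i" "\<forall>i<n. j < i \<longrightarrow> x j \<le> x i" "\<forall>i<n. x i \<le> k * x j"
      by blast
    have le: "x j \<le> x i" if "i < n" for i
      using j that by (cases i j rule: linorder_cases) auto
    have "Mn = x j" unfolding Mn_def using j le by (intro Min_eqI) auto
    then show "\<forall>i<n. x i \<le> k * Mn" using j by auto
  qed
  finally show ?thesis unfolding Mx_def Mn_def k_def .
qed

lemma range_disj:
  fixes x :: "nat \<Rightarrow> real"
  assumes "(\<forall>i<j1. x j1 < x i) \<and> (\<forall>i<n. j1 < i \<longrightarrow> x j1 \<le> x i)"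
    and "(\<forall>i<j2. x j2 < x i) \<and> (\<forall>i<n. j2 < i \<longrightarrow> x j2 \<le> x i)"
    and "j1 < n" "j2 < n"
  shows "j1 = j2"
proof (rule ccontr)
  assume "j1 \<noteq> j2"
  then consider "j1 < j2" | "j2 < j1" by linarith
  then show False
  proof cases
    case 1 then show False using assms by force
  next
    case 2 then show False using assms by force
  qed
qed


lemma SS_help1:
  assumes [measurable]: "f1 \<in> borel_measurable N" "g1 \<in> borel_measurable N"
  shows "{x\<in>space N. (P1 \<longrightarrow> (f1 x::real) < g1 x) \<and> (Q1 \<longrightarrow> f1 x \<le> g1 x) \<and> g1 x \<le> k * f1 x} \<in> sets N"
  by measurable

lemma SS_help2:
  assumes [measurable]: "f \<in> borel_measurable N"
  shows "{x\<in>space N. (\<nu>::real) < f x} \<in> sets N"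
  by measurable

lemma SS_sets:
  fixes j n :: nat
  assumes "j < n"
  shows "{x \<in> space (PiM {..<n} (\<lambda>_. borel::real measure)). \<nu> < x j \<and>
     (\<forall>i\<in>{..<n}. (i < j \<longrightarrow> x j < x i) \<and> (j < i \<longrightarrow> x j \<le> x i) \<and> x i \<le> k * x j)}
     \<in> sets (PiM {..<n} (\<lambda>_. borel::real measure))" (is "{x\<in>space ?N. ?A x \<and> ?B x} \<in> _")
proof -
  have cm: "(\<lambda>x. x i) \<in> borel_measurable ?N" if "i < n" for i
    using that by (intro measurable_component_singleton) auto
  have "{x\<in>space ?N. ?A x} \<in> sets ?N"
    by (rule SS_help2[OF cm[OF assms]])
  moreover have "{x\<in>space ?N. ?B x} \<in> sets ?N"
  proof (rule sets.sets_Collect_finite_All')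
    fix i assume "i \<in> {..<n}"
    then show "{x\<in>space ?N. (i < j \<longrightarrow> x j < x i) \<and> (j < i \<longrightarrow> x j \<le> x i) \<and> x i \<le> k * x j} \<in> sets ?N"
      using SS_help1[OF cm[OF assms] cm] by simp
  qed (use assms in auto)
  ultimately show ?thesis by (intro sets.sets_Collect_conj)
qed

lemma Q_Ioc:
  assumes "0 < \<nu>" "0 < \<beta>" "\<nu> < y" "0 \<le> r"
  shows "emeasure (density lborel (pd \<nu> \<beta>)) {y<..exp (r / \<beta>) * y} = ennreal ((\<nu> / y) powr \<beta> * (1 - exp (- r)))"
proof -
  interpret Q: real_distribution "density lborel (pd \<nu> \<beta>)"
    using assms by (intro real_distribution_pd) auto
  have y: "0 < y" using assms by simp
  have k1: "1 \<le> exp (r / \<beta>)" using assms by simp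
  then have le: "y \<le> exp (r / \<beta>) * y" using y by simp
  have kb: "exp (r / \<beta>) powr \<beta> = exp r"
    using assms by (simp add: powr_def)
  have "emeasure (density lborel (pd \<nu> \<beta>)) {y<..exp (r / \<beta>) * y}
      = ennreal (pareto_cdf \<nu> \<beta> (exp (r / \<beta>) * y) - pareto_cdf \<nu> \<beta> y)"
    using Q.emeasure_Ioc[OF le] assms by (simp add: cdf_pd)
  also have "pareto_cdf \<nu> \<beta> (exp (r / \<beta>) * y) - pareto_cdf \<nu> \<beta> y = (\<nu> / y) powr \<beta> * (1 - exp (- r))"
  proof -
    have "\<nu> < exp (r / \<beta>) * y" using le assms by linarith
    moreover have "(\<nu> / (exp (r / \<beta>) * y)) powr \<beta> = (\<nu> / y) powr \<beta> * exp (- r)"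
      using assms y by (simp add: powr_divide powr_mult kb exp_minus field_simps)
    ultimately show ?thesis using assms by (simp add: pareto_cdf_def algebra_simps)
  qed
  finally show ?thesis .
qed

lemma Q_Icc:
  assumes "0 < \<nu>" "0 < \<beta>" "\<nu> < y" "0 \<le> r"
  shows "emeasure (density lborel (pd \<nu> \<beta>)) {y..exp (r / \<beta>) * y} = ennreal ((\<nu> / y) powr \<beta> * (1 - exp (- r)))"
proof -
  have y: "0 < y" using assms by simp
  have "y \<le> exp (r / \<beta>) * y" using assms y by simp
  then have "{y..exp (r / \<beta>) * y} = {y} \<union> {y<..exp (r / \<beta>) * y}" by auto
  then have "emeasure (density lborel (pd \<nu> \<beta>)) {y..exp (r / \<beta>) * y}
     = emeasure (density lborel (pd \<nu> \<beta>)) {y} + emeasure (density lborel (pd \<nu> \<beta>)) {y<..exp (r / \<beta>) * y}"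
    by (simp add: plus_emeasure)
  then show ?thesis using Q_Ioc[OF assms] pd_singleton by simp
qed


definition SSet :: "real \<Rightarrow> real \<Rightarrow> nat \<Rightarrow> nat \<Rightarrow> (nat \<Rightarrow> real) set" where
  "SSet \<nu> k n j = {x \<in> space (PiM {..<n} (\<lambda>_. borel::real measure)). \<nu> < x j \<and>
     (\<forall>i\<in>{..<n}. (i < j \<longrightarrow> x j < x i) \<and> (j < i \<longrightarrow> x j \<le> x i) \<and> x i \<le> k * x j)}"

lemma inner_E:
  fixes n j :: nat and \<nu> \<beta> r y :: real
  assumes \<nu>: "0 < \<nu>" and \<beta>: "0 < \<beta>" and r: "0 \<le> r" and j: "j < n"
  shows "(\<integral>\<^sup>+ x. indicator (SSet \<nu> (exp (r / \<beta>)) n j) (x(j := y)) \<partial>PiM ({..<n} - {j}) (\<lambda>_. density lborel (pd \<nu> \<beta>)))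
     = ennreal (if \<nu> < y then ((\<nu> / y) powr \<beta> * (1 - exp (- r))) ^ (n - 1) else 0)"
proof -
  define Q where "Q = density lborel (pd \<nu> \<beta>)"
  define k where "k = exp (r / \<beta>)"
  define SS where "SS = SSet \<nu> k n j"
  define I where "I = {..<n} - {j}"
  define c where "c y = (\<nu> / y) powr \<beta> * (1 - exp (- r))" for y
  have k1: "1 \<le> k" unfolding k_def using r \<beta> by simp
  have Qprob: "prob_space Q" unfolding Q_def
    using real_distribution_pd[OF \<nu> \<beta>] by (simp add: real_distribution_def)
  interpret Qp: product_sigma_finite "\<lambda>_::nat. Q"
    unfolding product_sigma_finite_def using prob_space_imp_sigma_finite[OF Qprob] by simp
  have spQ[simp]: "space Q = UNIV" unfolding Q_def by simp
  have setsQ[simp]: "sets Q = sets borel" unfolding Q_def by simp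
  have nI: "{..<n} = insert j I" using j unfolding I_def by auto
  have I: "finite I" "j \<notin> I" "card I = n - 1" using j unfolding I_def by auto
  have "(\<integral>\<^sup>+ x. indicator SS (x(j := y)) \<partial>PiM I (\<lambda>_. Q)) = ennreal (if \<nu> < y then c y ^ (n - 1) else 0)"
  proof (cases "\<nu> < y")
    case False
    have "(\<integral>\<^sup>+ x. indicator SS (x(j := y)) \<partial>PiM I (\<lambda>_. Q)) = (\<integral>\<^sup>+ x. 0 \<partial>PiM I (\<lambda>_. Q))"
      by (rule nn_integral_cong) (use False in \<open>simp add: SS_def SSet_def indicator_def\<close>)
    then show ?thesis using False by simp
  next
    case True
    have y: "0 < y" using True \<nu> by simp
    have yk: "y \<le> k * y" using k1 y by simp
    define A where "A i = (if i < j then {y<..k * y} else {y..k * y})" for i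
    have "(\<integral>\<^sup>+ x. indicator SS (x(j := y)) \<partial>PiM I (\<lambda>_. Q)) = (\<integral>\<^sup>+ x. indicator (PiE I A) x \<partial>PiM I (\<lambda>_. Q))"
    proof (rule nn_integral_cong)
      fix x assume "x \<in> space (PiM I (\<lambda>_. Q))"
      then have x: "x \<in> PiE I (\<lambda>_. UNIV)" by (simp add: space_PiM)
      have xs: "x(j := y) \<in> space (PiM {..<n} (\<lambda>_. borel::real measure))"
        using x unfolding space_PiM nI by (auto simp: PiE_def extensional_def)
      have "x(j := y) \<in> SS \<longleftrightarrow> x \<in> PiE I A"
      proof
        assume H: "x(j := y) \<in> SS"
        show "x \<in> PiE I A"
          unfolding PiE_iff
        proof (intro conjI ballI)
          fix i assume i: "i \<in> I"
          then have i2: "i \<in> {..<n}" "i \<noteq> j" unfolding I_def by auto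
          have H2: "\<forall>i\<in>{..<n}. (i < j \<longrightarrow> (x(j := y)) j < (x(j := y)) i) \<and> (j < i \<longrightarrow> (x(j := y)) j \<le> (x(j := y)) i) \<and> (x(j := y)) i \<le> k * (x(j := y)) j"
            using H unfolding SS_def SSet_def by blast
          have "(i < j \<longrightarrow> y < x i) \<and> (j < i \<longrightarrow> y \<le> x i) \<and> x i \<le> k * y"
            using H2[rule_format, OF i2(1)] i2(2) by simp
          then show "x i \<in> A i" using i2 unfolding A_def by (auto simp: not_less)
        next
          show "x \<in> extensional I" using x by (simp add: PiE_def)
        qed
      next
        assume H: "x \<in> PiE I A"
        have "\<forall>i\<in>{..<n}. (i < j \<longrightarrow> y < (x(j := y)) i) \<and> (j < i \<longrightarrow> y \<le> (x(j := y)) i) \<and> (x(j := y)) i \<le> k * y"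
        proof
          fix i assume i: "i \<in> {..<n}"
          show "(i < j \<longrightarrow> y < (x(j := y)) i) \<and> (j < i \<longrightarrow> y \<le> (x(j := y)) i) \<and> (x(j := y)) i \<le> k * y"
          proof (cases "i = j")
            case True then show ?thesis using yk by simp
          next
            case False
            then have "i \<in> I" using i unfolding I_def by auto
            then have "x i \<in> A i" using H by (simp add: PiE_iff)
            then show ?thesis using False unfolding A_def by (auto split: if_splits)
          qed
        qed
        then show "x(j := y) \<in> SS" using xs True unfolding SS_def SSet_def by simp
      qed
      then show "indicator SS (x(j := y)) = (indicator (PiE I A) x :: ennreal)"
        by (simp add: indicator_def)
    qed
    also have "\<dots> = emeasure (PiM I (\<lambda>_. Q)) (PiE I A)"
      using I by (intro nn_integral_indicator sets_PiM_I_finite) (auto simp: A_def)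
    also have "\<dots> = (\<Prod>i\<in>I. emeasure Q (A i))"
      using I by (intro Qp.emeasure_PiM) (auto simp: A_def)
    also have "\<dots> = (\<Prod>i\<in>I. ennreal (c y))"
    proof (rule prod.cong[OF refl])
      fix i
      show "emeasure Q (A i) = ennreal (c y)"
        unfolding A_def Q_def c_def k_def using Q_Ioc[OF \<nu> \<beta> True r] Q_Icc[OF \<nu> \<beta> True r] by simp
    qed
    also have "\<dots> = ennreal (c y ^ (n - 1))"
      using I y \<nu> r by (simp add: ennreal_power c_def)
    finally show ?thesis using True by simp
  qed
  then show ?thesis unfolding Q_def SS_def I_def c_def k_def .
qed

lemma prod_E:
  fixes n j :: nat and \<nu> \<beta> r :: real
  assumes \<nu>: "0 < \<nu>" and \<beta>: "0 < \<beta>" and r: "0 \<le> r" and j: "j < n"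
  shows "emeasure (PiM {..<n} (\<lambda>_. density lborel (pd \<nu> \<beta>))) (SSet \<nu> (exp (r / \<beta>)) n j)
     = ennreal ((1 - exp (- r)) ^ (n - 1) / real n)"
proof -
  define Q where "Q = density lborel (pd \<nu> \<beta>)"
  define SS where "SS = SSet \<nu> (exp (r / \<beta>)) n j"
  define I where "I = {..<n} - {j}"
  define c where "c y = (\<nu> / y) powr \<beta> * (1 - exp (- r))" for y
  have Qprob: "prob_space Q" unfolding Q_def
    using real_distribution_pd[OF \<nu> \<beta>] by (simp add: real_distribution_def)
  interpret Qp: product_sigma_finite "\<lambda>_::nat. Q"
    unfolding product_sigma_finite_def using prob_space_imp_sigma_finite[OF Qprob] by simp
  have nI: "{..<n} = insert j I" using j unfolding I_def by auto
  have I: "finite I" "j \<notin> I" using j unfolding I_def by auto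
  have sets_eq: "sets (PiM {..<n} (\<lambda>_. Q)) = sets (PiM {..<n} (\<lambda>_. borel::real measure))"
    by (rule sets_PiM_cong) (auto simp: Q_def)
  have SSm0: "SS \<in> sets (PiM {..<n} (\<lambda>_. Q))"
    using SS_sets[OF j, of \<nu> "exp (r / \<beta>)"] unfolding sets_eq SS_def SSet_def .
  then have SSm: "SS \<in> sets (PiM (insert j I) (\<lambda>_. Q))" by (simp only: nI)
  have "emeasure (PiM {..<n} (\<lambda>_. Q)) SS = (\<integral>\<^sup>+ x. indicator SS x \<partial>PiM (insert j I) (\<lambda>_. Q))"
    using SSm unfolding nI by simp
  also have "\<dots> = (\<integral>\<^sup>+ y. (\<integral>\<^sup>+ x. indicator SS (x(j := y)) \<partial>PiM I (\<lambda>_. Q)) \<partial>Q)"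
    using SSm I by (intro Qp.product_nn_integral_insert_rev) auto
  also have "\<dots> = (\<integral>\<^sup>+ y. ennreal (if \<nu> < y then c y ^ (n - 1) else 0) \<partial>Q)"
    unfolding SS_def I_def Q_def c_def using inner_E[OF \<nu> \<beta> r j] by simp
  also have "\<dots> = (\<integral>\<^sup>+ y. ennreal (pd \<nu> \<beta> y) * ennreal (if \<nu> < y then c y ^ (n - 1) else 0) \<partial>lborel)"
    unfolding Q_def c_def by (intro nn_integral_density; measurable)
  also have "\<dots> = (\<integral>\<^sup>+ y. ennreal ((1 - exp (- r)) ^ (n - 1)) * (ennreal (pd \<nu> \<beta> y) * ennreal ((\<nu> / y) powr (\<beta> * real (n - 1)))) \<partial>lborel)"
  proof (rule nn_integral_cong)
    fix y :: real
    show "ennreal (pd \<nu> \<beta> y) * ennreal (if \<nu> < y then c y ^ (n - 1) else 0)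
        = ennreal ((1 - exp (- r)) ^ (n - 1)) * (ennreal (pd \<nu> \<beta> y) * ennreal ((\<nu> / y) powr (\<beta> * real (n - 1))))"
    proof (cases "\<nu> < y")
      case True
      then have y: "0 < y" using \<nu> by simp
      have "((\<nu> / y) powr \<beta>) ^ (n - 1) = (\<nu> / y) powr (\<beta> * real (n - 1))"
        using y \<nu> by (simp add: powr_realpow[symmetric] powr_powr)
      then have "c y ^ (n - 1) = (1 - exp (- r)) ^ (n - 1) * (\<nu> / y) powr (\<beta> * real (n - 1))"
        unfolding c_def by (simp add: power_mult_distrib)
      then show ?thesis using True r by (simp add: ennreal_mult'[symmetric] mult_ac)
    qed (simp add: pd_def)
  qed
  also have "\<dots> = ennreal ((1 - exp (- r)) ^ (n - 1)) * ennreal (1 / real (Suc (n - 1)))"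
    by (subst nn_integral_cmult) (auto simp: pd_power[OF \<nu> \<beta>])
  also have "\<dots> = ennreal ((1 - exp (- r)) ^ (n - 1) / real n)"
    using j r by (simp add: ennreal_mult'[symmetric] divide_inverse)
  finally show ?thesis unfolding Q_def SS_def .
qed


locale pareto_sample = prob_space M for M :: "'a measure" +
  fixes X :: "nat \<Rightarrow> 'a \<Rightarrow> real" and n :: nat and \<nu> \<beta> :: real
  assumes n2: "2 \<le> n" and \<nu>_pos: "0 < \<nu>" and \<beta>_pos: "0 < \<beta>"
    and rvX: "\<And>i. i < n \<Longrightarrow> X i \<in> borel_measurable M"
    and indepX: "indep_vars (\<lambda>_. borel) X {..<n}"
    and cdfX: "\<And>i x. i < n \<Longrightarrow> measure M {\<omega> \<in> space M. X i \<omega> \<le> x} = pareto_cdf \<nu> \<beta> x"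
begin

definition W :: "'a \<Rightarrow> real" where
  "W \<omega> = \<beta> * (ln (Max ((\<lambda>i. X i \<omega>) ` {..<n})) - ln (Min ((\<lambda>i. X i \<omega>) ` {..<n})))"

lemma W_meas[measurable]: "W \<in> borel_measurable M"
proof -
  have [measurable]: "(\<lambda>\<omega>. Max ((\<lambda>i. X i \<omega>) ` {..<n})) \<in> borel_measurable M"
    by (rule borel_measurable_Max) (auto intro: rvX)
  have [measurable]: "(\<lambda>\<omega>. Min ((\<lambda>i. X i \<omega>) ` {..<n})) \<in> borel_measurable M"
    by (rule borel_measurable_Min) (auto intro: rvX)
  show ?thesis unfolding W_def by measurable
qed

lemma distrX: "i < n \<Longrightarrow> distr M borel (X i) = density lborel (pd \<nu> \<beta>)"
proof (rule cdf_unique)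
  assume i: "i < n"
  show "real_distribution (distr M borel (X i))" using rvX[OF i] by simp
  show "real_distribution (density lborel (pd \<nu> \<beta>))" using \<nu>_pos \<beta>_pos by (rule real_distribution_pd)
  show "cdf (distr M borel (X i)) = cdf (density lborel (pd \<nu> \<beta>))"
  proof
    fix x
    have "cdf (distr M borel (X i)) x = measure M (X i -` {..x} \<inter> space M)"
      unfolding cdf_def using rvX[OF i] by (subst measure_distr) auto
    also have "X i -` {..x} \<inter> space M = {\<omega> \<in> space M. X i \<omega> \<le> x}" by auto
    finally show "cdf (distr M borel (X i)) x = cdf (density lborel (pd \<nu> \<beta>)) x"
      using cdfX[OF i] cdf_pd[OF \<nu>_pos \<beta>_pos] by simp
  qed
qed

lemma joint: "distr M (PiM {..<n} (\<lambda>_. borel)) (\<lambda>\<omega>. \<lambda>i\<in>{..<n}. X i \<omega>) = PiM {..<n} (\<lambda>_. density lborel (pd \<nu> \<beta>))"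
proof -
  have "distr M (PiM {..<n} (\<lambda>_. borel)) (\<lambda>\<omega>. \<lambda>i\<in>{..<n}. X i \<omega>) = PiM {..<n} (\<lambda>i. distr M borel (X i))"
  proof -
    have "0 \<in> {..<n}" using n2 by simp
    then have ne: "{..<n} \<noteq> {}" by blast
    have "indep_vars (\<lambda>_. borel) X {..<n} \<longleftrightarrow>
       distr M (PiM {..<n} (\<lambda>_. borel)) (\<lambda>\<omega>. \<lambda>i\<in>{..<n}. X i \<omega>) = PiM {..<n} (\<lambda>i. distr M borel (X i))"
      by (rule indep_vars_iff_distr_eq_PiM'[OF ne]) (use rvX in auto)
    then show ?thesis using indepX by simp
  qed
  also have "\<dots> = PiM {..<n} (\<lambda>_. density lborel (pd \<nu> \<beta>))"
    by (rule PiM_cong) (auto simp: distrX)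
  finally show ?thesis .
qed

lemma AE_gt: "AE \<omega> in M. \<forall>i\<in>{..<n}. \<nu> < X i \<omega>"
proof (rule eventually_ball_finite)
  show "\<forall>i\<in>{..<n}. AE \<omega> in M. \<nu> < X i \<omega>"
  proof
    fix i assume "i \<in> {..<n}"
    then have i: "i < n" by simp
    have "{\<omega> \<in> space M. X i \<omega> \<le> \<nu>} \<in> sets M" using rvX[OF i] by measurable
    moreover have "emeasure M {\<omega> \<in> space M. X i \<omega> \<le> \<nu>} = 0"
      using cdfX[OF i, of \<nu>] by (simp add: emeasure_eq_measure pareto_cdf_def)
    ultimately show "AE \<omega> in M. \<nu> < X i \<omega>"
      by (subst AE_iff_measurable[where N="{\<omega> \<in> space M. X i \<omega> \<le> \<nu>}"]) (auto simp: not_less)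
  qed
qed simp

definition E :: "nat \<Rightarrow> real \<Rightarrow> 'a set" where
  "E j r = {\<omega> \<in> space M. \<nu> < X j \<omega> \<and> (\<forall>i\<in>{..<n}. (i < j \<longrightarrow> X j \<omega> < X i \<omega>) \<and>
      (j < i \<longrightarrow> X j \<omega> \<le> X i \<omega>) \<and> X i \<omega> \<le> exp (r / \<beta>) * X j \<omega>)}"

lemma F_meas[measurable]: "(\<lambda>\<omega>. \<lambda>i\<in>{..<n}. X i \<omega>) \<in> measurable M (PiM {..<n} (\<lambda>_. borel))"
  by (rule measurable_restrict) (auto intro: rvX)

lemma E_eq:
  assumes j: "j < n"
  shows "(\<lambda>\<omega>. \<lambda>i\<in>{..<n}. X i \<omega>) -` SSet \<nu> (exp (r / \<beta>)) n j \<inter> space M = E j r"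
  using j unfolding SSet_def E_def by (auto simp: space_PiM)

lemma SSet_sets: "j < n \<Longrightarrow> SSet \<nu>' k n j \<in> sets (PiM {..<n} (\<lambda>_. borel))"
  unfolding SSet_def by (rule SS_sets)

lemma prob_E:
  assumes j: "j < n" and r: "0 \<le> r"
  shows "prob (E j r) = (1 - exp (- r)) ^ (n - 1) / real n"
proof -
  have "prob (E j r) = measure (distr M (PiM {..<n} (\<lambda>_. borel)) (\<lambda>\<omega>. \<lambda>i\<in>{..<n}. X i \<omega>)) (SSet \<nu> (exp (r / \<beta>)) n j)"
    using measure_distr[OF F_meas SSet_sets[OF j]] by (simp add: E_eq[OF j])
  also have "\<dots> = measure (PiM {..<n} (\<lambda>_. density lborel (pd \<nu> \<beta>))) (SSet \<nu> (exp (r / \<beta>)) n j)"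
    by (simp add: joint)
  also have "\<dots> = (1 - exp (- r)) ^ (n - 1) / real n"
    unfolding measure_def using prod_E[OF \<nu>_pos \<beta>_pos r j] r by simp
  finally show ?thesis .
qed

lemma E_sets: "j < n \<Longrightarrow> E j r \<in> sets M"
  using measurable_sets[OF F_meas SSet_sets] E_eq by metis

end


context pareto_sample
begin

lemma E_char:
  assumes "\<omega> \<in> space M" "\<forall>i\<in>{..<n}. \<nu> < X i \<omega>"
  shows "W \<omega> \<le> r \<longleftrightarrow> \<omega> \<in> (\<Union>j\<in>{..<n}. E j r)"
proof -
  have pos: "\<forall>i<n. 0 < X i \<omega>" using assms(2) \<nu>_pos by (auto intro: less_trans)
  have n0: "0 < n" using n2 by simp
  have "W \<omega> \<le> r \<longleftrightarrow> (\<exists>j<n. (\<forall>i<j. X j \<omega> < X i \<omega>) \<and> (\<forall>i<n. j < i \<longrightarrow> X j \<omega> \<le> X i \<omega>) \<and> (\<forall>i<n. X i \<omega> \<le> exp (r / \<beta>) * X j \<omega>))"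
    unfolding W_def using range_char[of n "\<lambda>i. X i \<omega>" \<beta> r] n0 pos \<beta>_pos by simp
  also have "\<dots> \<longleftrightarrow> \<omega> \<in> (\<Union>j\<in>{..<n}. E j r)"
  proof
    assume "\<exists>j<n. (\<forall>i<j. X j \<omega> < X i \<omega>) \<and> (\<forall>i<n. j < i \<longrightarrow> X j \<omega> \<le> X i \<omega>) \<and> (\<forall>i<n. X i \<omega> \<le> exp (r / \<beta>) * X j \<omega>)"
    then obtain j where j: "j < n" "\<forall>i<j. X j \<omega> < X i \<omega>" "\<forall>i<n. j < i \<longrightarrow> X j \<omega> \<le> X i \<omega>" "\<forall>i<n. X i \<omega> \<le> exp (r / \<beta>) * X j \<omega>"
      by blast
    then have "\<omega> \<in> E j r" using assms unfolding E_def by auto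
    then show "\<omega> \<in> (\<Union>j\<in>{..<n}. E j r)" using j by auto
  next
    assume "\<omega> \<in> (\<Union>j\<in>{..<n}. E j r)"
    then obtain j where j: "j < n" "\<omega> \<in> E j r" by auto
    then have "(\<forall>i<j. X j \<omega> < X i \<omega>) \<and> (\<forall>i<n. j < i \<longrightarrow> X j \<omega> \<le> X i \<omega>) \<and> (\<forall>i<n. X i \<omega> \<le> exp (r / \<beta>) * X j \<omega>)"
      unfolding E_def by auto
    then show "\<exists>j<n. (\<forall>i<j. X j \<omega> < X i \<omega>) \<and> (\<forall>i<n. j < i \<longrightarrow> X j \<omega> \<le> X i \<omega>) \<and> (\<forall>i<n. X i \<omega> \<le> exp (r / \<beta>) * X j \<omega>)"
      using j by blast
  qed
  finally show ?thesis .
qed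

lemma E_disj: "disjoint_family_on (\<lambda>j. E j r) {..<n}"
  unfolding disjoint_family_on_def
proof (intro ballI impI)
  fix j1 j2 assume j: "j1 \<in> {..<n}" "j2 \<in> {..<n}" "j1 \<noteq> j2"
  show "E j1 r \<inter> E j2 r = {}"
  proof (rule ccontr)
    assume "E j1 r \<inter> E j2 r \<noteq> {}"
    then obtain \<omega> where w: "\<omega> \<in> E j1 r" "\<omega> \<in> E j2 r" by blast
    have "j1 = j2"
    proof (rule range_disj[where x="\<lambda>i. X i \<omega>" and n=n])
      show "(\<forall>i<j1. X j1 \<omega> < X i \<omega>) \<and> (\<forall>i<n. j1 < i \<longrightarrow> X j1 \<omega> \<le> X i \<omega>)"
        using w(1) j unfolding E_def by auto
      show "(\<forall>i<j2. X j2 \<omega> < X i \<omega>) \<and> (\<forall>i<n. j2 < i \<longrightarrow> X j2 \<omega> \<le> X i \<omega>)"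
        using w(2) j unfolding E_def by auto
    qed (use j in auto)
    then show False using j by simp
  qed
qed

lemma cdf_W_pos:
  assumes r: "0 \<le> r"
  shows "prob {\<omega> \<in> space M. W \<omega> \<le> r} = (1 - exp (- r)) ^ (n - 1)"
proof -
  have S: "{\<omega> \<in> space M. W \<omega> \<le> r} \<in> sets M" by measurable
  have U: "(\<Union>j\<in>{..<n}. E j r) \<in> sets M" using E_sets by auto
  have "AE \<omega> in M. \<omega> \<in> {\<omega> \<in> space M. W \<omega> \<le> r} \<longleftrightarrow> \<omega> \<in> (\<Union>j\<in>{..<n}. E j r)"
    using AE_gt
  proof (rule AE_mp)
    show "AE \<omega> in M. (\<forall>i\<in>{..<n}. \<nu> < X i \<omega>) \<longrightarrow> (\<omega> \<in> {\<omega> \<in> space M. W \<omega> \<le> r} \<longleftrightarrow> \<omega> \<in> (\<Union>j\<in>{..<n}. E j r))"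
    proof (rule AE_I2, intro impI)
      fix \<omega> assume "\<omega> \<in> space M" "\<forall>i\<in>{..<n}. \<nu> < X i \<omega>"
      then show "\<omega> \<in> {\<omega> \<in> space M. W \<omega> \<le> r} \<longleftrightarrow> \<omega> \<in> (\<Union>j\<in>{..<n}. E j r)"
        using E_char by auto
    qed
  qed
  then have "emeasure M {\<omega> \<in> space M. W \<omega> \<le> r} = emeasure M (\<Union>j\<in>{..<n}. E j r)"
    by (rule emeasure_eq_AE[OF _ S U])
  then have "prob {\<omega> \<in> space M. W \<omega> \<le> r} = prob (\<Union>j\<in>{..<n}. E j r)"
    by (simp add: measure_def)
  also have "\<dots> = (\<Sum>j\<in>{..<n}. prob (E j r))"
    by (rule finite_measure_finite_Union) (use E_sets E_disj in auto)
  also have "\<dots> = (\<Sum>j\<in>{..<n}. (1 - exp (- r)) ^ (n - 1) / real n)"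
    using prob_E r by simp
  also have "\<dots> = (1 - exp (- r)) ^ (n - 1)" using n2 by simp
  finally show ?thesis .
qed

lemma cdf_W_neg:
  assumes r: "r < 0"
  shows "prob {\<omega> \<in> space M. W \<omega> \<le> r} = 0"
proof -
  have S: "{\<omega> \<in> space M. W \<omega> \<le> r} \<in> sets M" by measurable
  have "AE \<omega> in M. \<omega> \<in> {\<omega> \<in> space M. W \<omega> \<le> r} \<longleftrightarrow> \<omega> \<in> {}"
    using AE_gt
  proof (rule AE_mp)
    show "AE \<omega> in M. (\<forall>i\<in>{..<n}. \<nu> < X i \<omega>) \<longrightarrow> (\<omega> \<in> {\<omega> \<in> space M. W \<omega> \<le> r} \<longleftrightarrow> \<omega> \<in> {})"
    proof (rule AE_I2, intro impI)
      fix \<omega> assume "\<omega> \<in> space M" "\<forall>i\<in>{..<n}. \<nu> < X i \<omega>"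
      then have "\<forall>i<n. 0 < X i \<omega>" using \<nu>_pos by (auto intro: less_trans)
      then have "0 \<le> W \<omega>" unfolding W_def using range_nonneg[of n "\<lambda>i. X i \<omega>" \<beta>] n2 \<beta>_pos by simp
      then show "\<omega> \<in> {\<omega> \<in> space M. W \<omega> \<le> r} \<longleftrightarrow> \<omega> \<in> {}" using r by auto
    qed
  qed
  then have "emeasure M {\<omega> \<in> space M. W \<omega> \<le> r} = emeasure M {}"
    by (rule emeasure_eq_AE[OF _ S]) simp
  then show ?thesis by (simp add: measure_def)
qed

lemma distrW: "distr M borel W = density lborel (g (n - 1))"
proof (rule cdf_unique)
  show "real_distribution (distr M borel W)" by simp
  show "real_distribution (density lborel (g (n - 1)))" using n2 by (intro real_distribution_g) simp
  show "cdf (distr M borel W) = cdf (density lborel (g (n - 1)))"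
  proof
    fix x
    have "cdf (distr M borel W) x = measure M (W -` {..x} \<inter> space M)"
      unfolding cdf_def by (subst measure_distr) auto
    also have "W -` {..x} \<inter> space M = {\<omega> \<in> space M. W \<omega> \<le> x}" by auto
    finally show "cdf (distr M borel W) x = cdf (density lborel (g (n - 1))) x"
      using cdf_W_pos[of x] cdf_W_neg[of x] cdf_g[of "n - 1" x] n2 by (cases "0 \<le> x") auto
  qed
qed

lemma W_integrable:
  assumes [measurable]: "h \<in> borel_measurable borel"
  shows "integrable M (\<lambda>\<omega>. h (W \<omega>)) \<longleftrightarrow> integrable lborel (\<lambda>w. g (n - 1) w * h w)"
proof -
  have "integrable M (\<lambda>\<omega>. h (W \<omega>)) \<longleftrightarrow> integrable (distr M borel W) h"
    by (rule integrable_distr_eq[symmetric]) auto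
  also have "\<dots> \<longleftrightarrow> integrable lborel (\<lambda>w. g (n - 1) w *\<^sub>R h w)"
    unfolding distrW by (rule integrable_density) (auto simp: g_nonneg)
  finally show ?thesis by simp
qed

lemma W_integral:
  assumes [measurable]: "h \<in> borel_measurable borel"
  shows "(\<integral>\<omega>. h (W \<omega>) \<partial>M) = (\<integral>w. g (n - 1) w * h w \<partial>lborel)"
proof -
  have "(\<integral>\<omega>. h (W \<omega>) \<partial>M) = integral\<^sup>L (distr M borel W) h"
    by (rule integral_distr[symmetric]) auto
  also have "\<dots> = (\<integral>w. g (n - 1) w *\<^sub>R h w \<partial>lborel)"
    unfolding distrW by (rule integral_density) (auto simp: g_nonneg)
  finally show ?thesis by simp
qed

end


definition s2 :: "nat \<Rightarrow> real" where "s2 m = (\<Sum>i<m. 1 / real (Suc i) ^ 2)"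
definition s3 :: "nat \<Rightarrow> real" where "s3 m = (\<Sum>i<m. 1 / real (Suc i) ^ 3)"

lemma sums2: "(\<lambda>k. 1 / real (Suc k) ^ 2) sums (pi\<^sup>2 / 6)"
  using inverse_squares_sums by (simp add: add.commute)

lemma Polygamma1_1: "Polygamma 1 (1::real) = pi\<^sup>2 / 6"
proof -
  have "(\<lambda>k. inverse ((1 + of_nat k)^Suc 1)) sums ((-1) ^ Suc 1 * Polygamma 1 (1::real) / fact 1)"
    by (rule Polygamma_LIMSEQ) auto
  then have "(\<lambda>k. 1 / real (Suc k) ^ 2) sums Polygamma 1 (1::real)"
    by (simp add: inverse_eq_divide add.commute numeral_2_eq_2)
  then show ?thesis using sums2 sums_unique2 by blast
qed

lemma sums3: "(\<lambda>k. 1 / real (Suc k) ^ 3) sums (- Polygamma 2 (1::real) / 2)"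
proof -
  have "(\<lambda>k. inverse ((1 + of_nat k)^Suc 2)) sums ((-1) ^ Suc 2 * Polygamma 2 (1::real) / fact 2)"
    by (rule Polygamma_LIMSEQ) auto
  then show ?thesis
    by (simp add: inverse_eq_divide add.commute numeral_3_eq_3 numeral_2_eq_2)
qed

lemma zeta3_eq: "zeta3 = - Polygamma 2 (1::real) / 2"
  unfolding zeta3_def using sums3 by (simp add: sums_iff)

lemma sums3': "(\<lambda>k. 1 / real (Suc k) ^ 3) sums zeta3"
  using sums3 zeta3_eq by simp

lemma Polygamma1_nat: "Polygamma 1 (real (Suc m)) = pi\<^sup>2 / 6 - s2 m"
proof -
  have "Polygamma 1 (1 + of_nat m) = Polygamma 1 (1::real) + (-1) ^ 1 * fact 1 * (\<Sum>k<m. 1 / (1 + of_nat k) ^ Suc 1)"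
    by (rule Polygamma_plus_of_nat) auto
  then show ?thesis
    using Polygamma1_1 by (simp add: s2_def add.commute numeral_2_eq_2)
qed

lemma Polygamma2_nat: "Polygamma 2 (real (Suc m)) = - 2 * zeta3 + 2 * s3 m"
proof -
  have "Polygamma 2 (1 + of_nat m) = Polygamma 2 (1::real) + (-1) ^ 2 * fact 2 * (\<Sum>k<m. 1 / (1 + of_nat k) ^ Suc 2)"
    by (rule Polygamma_plus_of_nat) auto
  then show ?thesis
    by (simp add: zeta3_eq s3_def add.commute numeral_3_eq_3 numeral_2_eq_2)
qed

lemma Digamma_nat: "Digamma (real (Suc m)) + euler_mascheroni = harm m"
  using Digamma_of_nat[of m, where 'a=real] by simp

lemma s2_lim: "s2 \<longlonglongrightarrow> pi\<^sup>2 / 6"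
  using sums2 unfolding sums_def s2_def .

lemma s3_lim: "s3 \<longlonglongrightarrow> zeta3"
  using sums3' unfolding sums_def s3_def .

lemma s2_pos: "m > 0 \<Longrightarrow> 0 < s2 m"
  unfolding s2_def by (intro sum_pos) auto

lemma zeta3_pos: "0 < zeta3"
proof -
  have "0 < (\<Sum>k<1. 1 / real (Suc k) ^ 3)" by simp
  also have "\<dots> \<le> zeta3"
    unfolding zeta3_def using sums3' by (intro sum_le_suminf) (auto simp: sums_iff)
  finally show ?thesis .
qed

lemma mean_lim:
  assumes c: "0 < c"
  shows "(\<lambda>n. (1 + harm (n - 1) / c) / (ln (real n) / c)) \<longlonglongrightarrow> 1"
proof -
  have a: "(\<lambda>n. harm n - ln (real n) - 1 / real n) \<longlonglongrightarrow> euler_mascheroni - 0"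
    by (intro tendsto_diff euler_mascheroni_LIMSEQ lim_const_over_n)
  have lnf: "filterlim (\<lambda>n. ln (real n)) at_infinity sequentially"
    by (intro filterlim_at_top_imp_at_infinity filterlim_compose[OF ln_at_top filterlim_real_sequentially])
  have b: "(\<lambda>n. c + (harm n - ln (real n) - 1 / real n)) \<longlonglongrightarrow> c + (euler_mascheroni - 0)"
    by (intro tendsto_add tendsto_const a)
  have "(\<lambda>n. (c + (harm n - ln (real n) - 1 / real n)) / ln (real n) + 1) \<longlonglongrightarrow> 0 + 1"
    by (intro tendsto_add tendsto_divide_0[OF b lnf] tendsto_const)
  moreover have "eventually (\<lambda>n. (c + (harm n - ln (real n) - 1 / real n)) / ln (real n) + 1
      = (1 + harm (n - 1) / c) / (ln (real n) / c)) sequentially"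
    using eventually_ge_at_top[of 2]
  proof eventually_elim
    case (elim n)
    then obtain k where k: "n = Suc k" "k \<ge> 1" by (cases n) auto
    have ln: "0 < ln (real n)" using elim by simp
    have "harm n = harm (n - 1) + 1 / real n" using k by (simp add: harm_Suc inverse_eq_divide)
    then show ?case using ln c by (simp add: field_simps)
  qed
  ultimately show ?thesis by (auto intro: Lim_transform_eventually)
qed

lemma skew_const: "2 * zeta3 / (pi\<^sup>2 / 6) powr (3 / 2) = 12 * sqrt 6 * zeta3 / pi ^ 3"
proof -
  have "(pi\<^sup>2 / 6) powr (3 / 2) = (pi\<^sup>2 / 6) powr 1 * (pi\<^sup>2 / 6) powr (1 / 2)"
    by (subst powr_add[symmetric]) simp
  also have "\<dots> = pi\<^sup>2 / 6 * (pi / sqrt 6)"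
    by (simp add: powr_half_sqrt real_sqrt_divide)
  finally have e: "(pi\<^sup>2 / 6) powr (3 / 2) = pi\<^sup>2 / 6 * (pi / sqrt 6)" .
  have s6: "sqrt 6 * sqrt 6 = (6::real)" by simp
  show ?thesis unfolding e using s6
    by (simp add: field_simps power2_eq_square power3_eq_cube)
qed


lemma g_poly:
  assumes m: "m > 0" and p: "\<And>w. p w = a0 + a1 * w + a2 * w ^ 2 + a3 * w ^ 3"
  shows "has_bochner_integral lborel (\<lambda>w. g m w * p w)
           (a0 + a1 * harm m + a2 * (2 * S 2 m) + a3 * (6 * S 3 m))"
proof -
  have h: "has_bochner_integral lborel (\<lambda>w. a0 * (g m w * w ^ 0) + a1 * (g m w * w ^ 1) + a2 * (g m w * w ^ 2) + a3 * (g m w * w ^ 3))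
     (a0 * (fact 0 * S 0 m) + a1 * (fact 1 * S 1 m) + a2 * (fact 2 * S 2 m) + a3 * (fact 3 * S 3 m))"
    by (intro has_bochner_integral_add has_bochner_integral_mult_right g_moment m)
  have e1: "(\<lambda>w. a0 * (g m w * w ^ 0) + a1 * (g m w * w ^ 1) + a2 * (g m w * w ^ 2) + a3 * (g m w * w ^ 3)) = (\<lambda>w. g m w * p w)"
    by (auto simp: p algebra_simps)
  have e2: "a0 * (fact 0 * S 0 m) + a1 * (fact 1 * S 1 m) + a2 * (fact 2 * S 2 m) + a3 * (fact 3 * S 3 m)
      = a0 + a1 * harm m + a2 * (2 * S 2 m) + a3 * (6 * S 3 m)"
    using S0[OF m] S1[of m] by (simp add: fact_numeral)
  show ?thesis using h unfolding e1 e2 .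
qed

lemma powr_three_halves: "0 < (x::real) \<Longrightarrow> x powr (3 / 2) = sqrt x ^ 3"
proof -
  assume x: "0 < x"
  have "x powr (3 / 2) = x powr 1 * x powr (1 / 2)" by (subst powr_add[symmetric]) simp
  also have "\<dots> = x * sqrt x" using x by (simp add: powr_half_sqrt)
  also have "\<dots> = sqrt x ^ 3" using x by (simp add: power3_eq_cube)
  finally show ?thesis .
qed

context pareto_sample
begin

lemma m_pos: "0 < n - 1" using n2 by simp

lemma EW_poly:
  assumes p: "\<And>w. p w = a0 + a1 * w + a2 * w ^ 2 + a3 * w ^ 3"
  shows "integrable M (\<lambda>\<omega>. p (W \<omega>))"
    and "(\<integral>\<omega>. p (W \<omega>) \<partial>M) = a0 + a1 * harm (n - 1) + a2 * (2 * S 2 (n - 1)) + a3 * (6 * S 3 (n - 1))"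
proof -
  have pe: "p = (\<lambda>w. a0 + a1 * w + a2 * w ^ 2 + a3 * w ^ 3)" using p by auto
  have [measurable]: "p \<in> borel_measurable borel" unfolding pe by measurable
  note H = g_poly[OF m_pos p]
  show "integrable M (\<lambda>\<omega>. p (W \<omega>))"
    using H by (subst W_integrable) (auto simp: has_bochner_integral_iff)
  show "(\<integral>\<omega>. p (W \<omega>) \<partial>M) = a0 + a1 * harm (n - 1) + a2 * (2 * S 2 (n - 1)) + a3 * (6 * S 3 (n - 1))"
    using H by (subst W_integral) (auto simp: has_bochner_integral_iff)
qed

lemma EW_mgf:
  assumes s: "s < 1"
  shows "integrable M (\<lambda>\<omega>. exp (s * W \<omega>))"
    and "(\<integral>\<omega>. exp (s * W \<omega>) \<partial>M) = real (n - 1) * Beta (1 - s) (real (n - 1))"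
proof -
  have [measurable]: "(\<lambda>w. exp (s * w)) \<in> borel_measurable borel" by measurable
  note H = g_mgf[OF m_pos s]
  have val: "P (n - 1) s = real (n - 1) * Beta (1 - s) (real (n - 1))"
    using P_prod[OF s m_pos] Beta_prod[OF s m_pos] by simp
  show "integrable M (\<lambda>\<omega>. exp (s * W \<omega>))"
    using H by (subst W_integrable) (auto simp: has_bochner_integral_iff)
  show "(\<integral>\<omega>. exp (s * W \<omega>) \<partial>M) = real (n - 1) * Beta (1 - s) (real (n - 1))"
    using H val by (subst W_integral) (auto simp: has_bochner_integral_iff)
qed

context
  fixes \<rho> :: real
  assumes \<rho>: "1 < \<rho>"
begin

definition c :: real where "c = \<beta> * ln \<rho>"

lemma c_eq: "c = \<beta> * ln \<rho>" unfolding c_def ..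

lemma c_pos: "0 < c" unfolding c_def using \<rho> \<beta>_pos by simp

lemma rs_eq: "range_stat \<rho> n X = (\<lambda>\<omega>. W \<omega> / c + 1)"
  using \<rho> \<beta>_pos unfolding c_def W_def range_stat_def by (auto simp: fun_eq_iff field_simps)

lemma mgf:
  assumes t: "t < c"
  shows "integrable M (\<lambda>\<omega>. exp (t * range_stat \<rho> n X \<omega>))"
    and "(\<integral>\<omega>. exp (t * range_stat \<rho> n X \<omega>) \<partial>M) = (real n - 1) * exp t * Beta (1 - t / c) (real n - 1)"
proof -
  have s: "t / c < 1" using t c_pos by simp
  have e: "(\<lambda>\<omega>. exp (t * range_stat \<rho> n X \<omega>)) = (\<lambda>\<omega>. exp t * exp (t / c * W \<omega>))"
    unfolding rs_eq using c_pos by (auto simp: fun_eq_iff exp_add[symmetric] field_simps)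
  have rn: "real n - 1 = real (n - 1)" using n2 by simp
  show "integrable M (\<lambda>\<omega>. exp (t * range_stat \<rho> n X \<omega>))"
    unfolding e using EW_mgf(1)[OF s] by simp
  show "(\<integral>\<omega>. exp (t * range_stat \<rho> n X \<omega>) \<partial>M) = (real n - 1) * exp t * Beta (1 - t / c) (real n - 1)"
    unfolding e rn using EW_mgf(2)[OF s] by simp
qed

lemma mean:
  shows "integrable M (range_stat \<rho> n X)"
    and "(\<integral>\<omega>. range_stat \<rho> n X \<omega> \<partial>M) = 1 + harm (n - 1) / c"
proof -
  have p: "\<And>w. w / c + 1 = 1 + (1 / c) * w + 0 * w ^ 2 + 0 * w ^ 3" by simp
  show "integrable M (range_stat \<rho> n X)"
    unfolding rs_eq using EW_poly(1)[OF p] .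
  show "(\<integral>\<omega>. range_stat \<rho> n X \<omega> \<partial>M) = 1 + harm (n - 1) / c"
    unfolding rs_eq using EW_poly(2)[OF p] by simp
qed

lemma var:
  shows "var_of M (range_stat \<rho> n X) = s2 (n - 1) / c\<^sup>2"
proof -
  define hm where "hm = (harm (n - 1) :: real)"
  have p: "\<And>w. (w / c + 1 - (1 + hm / c))\<^sup>2 = hm\<^sup>2 / c\<^sup>2 + (- 2 * hm / c\<^sup>2) * w + (1 / c\<^sup>2) * w ^ 2 + 0 * w ^ 3"
    using c_pos by (simp add: power2_eq_square field_simps)
  have "var_of M (range_stat \<rho> n X) = (\<integral>\<omega>. (W \<omega> / c + 1 - (1 + hm / c))\<^sup>2 \<partial>M)"
    unfolding var_of_def mean(2) unfolding rs_eq hm_def ..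
  also have "\<dots> = hm\<^sup>2 / c\<^sup>2 + (- 2 * hm / c\<^sup>2) * hm + (1 / c\<^sup>2) * (2 * S 2 (n - 1)) + 0 * (6 * S 3 (n - 1))"
    using EW_poly(2)[OF p] unfolding hm_def by simp
  also have "\<dots> = (2 * S 2 (n - 1) - hm\<^sup>2) / c\<^sup>2"
    using c_pos by (simp add: field_simps power2_eq_square)
  also have "\<dots> = s2 (n - 1) / c\<^sup>2"
    unfolding hm_def var_ident s2_def ..
  finally show ?thesis .
qed

lemma skew:
  shows "skew_of M (range_stat \<rho> n X) = 2 * s3 (n - 1) / s2 (n - 1) powr (3 / 2)"
proof -
  define hm where "hm = (harm (n - 1) :: real)"
  define d where "d = sqrt (s2 (n - 1))"
  have V: "0 < s2 (n - 1)" using s2_pos[OF m_pos] .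
  have d: "0 < d" unfolding d_def using V by simp
  have sq: "sqrt (var_of M (range_stat \<rho> n X)) = d / c"
    unfolding var d_def using c_pos by (simp add: real_sqrt_divide)
  have p: "\<And>w. ((w / c + 1 - (1 + hm / c)) / (d / c)) ^ 3
     = (- (hm ^ 3) / d ^ 3) + (3 * hm\<^sup>2 / d ^ 3) * w + (- 3 * hm / d ^ 3) * w ^ 2 + (1 / d ^ 3) * w ^ 3"
  proof -
    fix w
    have e: "(w / c + 1 - (1 + hm / c)) / (d / c) = (w - hm) / d"
      using c_pos d by (simp add: field_simps)
    show "((w / c + 1 - (1 + hm / c)) / (d / c)) ^ 3
     = (- (hm ^ 3) / d ^ 3) + (3 * hm\<^sup>2 / d ^ 3) * w + (- 3 * hm / d ^ 3) * w ^ 2 + (1 / d ^ 3) * w ^ 3"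
      unfolding e using d by (simp add: power_divide field_simps power2_eq_square power3_eq_cube)
  qed
  have "skew_of M (range_stat \<rho> n X) = (\<integral>\<omega>. ((W \<omega> / c + 1 - (1 + hm / c)) / (d / c)) ^ 3 \<partial>M)"
    unfolding skew_of_def sq mean(2) unfolding rs_eq hm_def ..
  also have "\<dots> = (- (hm ^ 3) / d ^ 3) + (3 * hm\<^sup>2 / d ^ 3) * hm + (- 3 * hm / d ^ 3) * (2 * S 2 (n - 1)) + (1 / d ^ 3) * (6 * S 3 (n - 1))"
    using EW_poly(2)[OF p] unfolding hm_def by simp
  also have "\<dots> = (6 * S 3 (n - 1) - 6 * hm * S 2 (n - 1) + 2 * hm ^ 3) / d ^ 3"
    using d by (simp add: field_simps power2_eq_square power3_eq_cube)
  also have "\<dots> = 2 * s3 (n - 1) / d ^ 3"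
    unfolding hm_def skew_ident s3_def ..
  also have "\<dots> = 2 * s3 (n - 1) / s2 (n - 1) powr (3 / 2)"
    unfolding d_def using powr_three_halves[OF V] by simp
  finally show ?thesis .
qed

end

end


theorem proposition2:
  fixes M :: "'a measure" and X :: "nat \<Rightarrow> nat \<Rightarrow> 'a \<Rightarrow> real"
    and \<nu> \<beta> \<rho> :: real
  assumes "prob_space M"
    and "\<nu> > 0" and "\<beta> > 0" and "\<rho> > 1"
    and rv: "\<And>n i. 2 \<le> n \<Longrightarrow> i < n \<Longrightarrow> X n i \<in> borel_measurable M"
    and indep: "\<And>n. 2 \<le> n \<Longrightarrow> prob_space.indep_vars M (\<lambda>_. borel) (X n) {..<n}"
    and pareto: "\<And>n i x. 2 \<le> n \<Longrightarrow> i < n \<Longrightarrow>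
                   measure M {\<omega> \<in> space M. X n i \<omega> \<le> x} = pareto_cdf \<nu> \<beta> x"
  shows
    "(\<forall>n\<ge>2. \<forall>t::real. t < \<beta> * ln \<rho> \<longrightarrow>
        integrable M (\<lambda>\<omega>. exp (t * range_stat \<rho> n (X n) \<omega>)) \<and>
        (\<integral>\<omega>. exp (t * range_stat \<rho> n (X n) \<omega>) \<partial>M)
          = (real n - 1) * exp t * Beta (1 - t / (\<beta> * ln \<rho>)) (real n - 1))
     \<and> (\<forall>n\<ge>2. integrable M (range_stat \<rho> n (X n)) \<and>
        (\<integral>\<omega>. range_stat \<rho> n (X n) \<omega> \<partial>M)
          = 1 + (Digamma (real n) + euler_mascheroni) / (\<beta> * ln \<rho>))
     \<and> (\<forall>n\<ge>2. var_of M (range_stat \<rho> n (X n))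
          = (pi\<^sup>2 / 6 - Polygamma 1 (real n)) / (\<beta>\<^sup>2 * (ln \<rho>)\<^sup>2))
     \<and> (\<forall>n\<ge>2. skew_of M (range_stat \<rho> n (X n))
          = (2 * zeta3 + Polygamma 2 (real n)) / (pi\<^sup>2 / 6 - Polygamma 1 (real n)) powr (3/2))
     \<and> (\<lambda>n. \<integral>\<omega>. range_stat \<rho> n (X n) \<omega> \<partial>M) \<sim>[at_top] (\<lambda>n. ln (real n) / (\<beta> * ln \<rho>))
     \<and> (\<lambda>n. var_of M (range_stat \<rho> n (X n))) \<sim>[at_top] (\<lambda>n. pi\<^sup>2 / (6 * \<beta>\<^sup>2 * (ln \<rho>)\<^sup>2))
     \<and> (\<lambda>n. skew_of M (range_stat \<rho> n (X n))) \<sim>[at_top] (\<lambda>n. 12 * sqrt 6 * zeta3 / pi ^ 3)"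
proof -
  note \<rho> = \<open>\<rho> > 1\<close>
  interpret P0: prob_space M by fact
  have loc: "pareto_sample M (X n) n \<nu> \<beta>" if n: "2 \<le> n" for n
    by (intro pareto_sample.intro pareto_sample_axioms.intro) (use assms n in auto)
  define c where "c = \<beta> * ln \<rho>"
  have c_pos: "0 < c" unfolding c_def using \<rho> \<open>\<beta> > 0\<close> by simp
  have mean_eq: "(\<integral>\<omega>. range_stat \<rho> n (X n) \<omega> \<partial>M) = 1 + harm (n - 1) / c" if n: "2 \<le> n" for n
  proof -
    interpret S: pareto_sample M "X n" n \<nu> \<beta> by (rule loc[OF n])
    show ?thesis using S.mean(2)[OF \<rho>] by (simp add: S.c_eq[OF \<rho>] c_def)
  qed
  have var_eq: "var_of M (range_stat \<rho> n (X n)) = s2 (n - 1) / c\<^sup>2" if n: "2 \<le> n" for n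
  proof -
    interpret S: pareto_sample M "X n" n \<nu> \<beta> by (rule loc[OF n])
    show ?thesis using S.var[OF \<rho>] by (simp add: S.c_eq[OF \<rho>] c_def)
  qed
  have skew_eq: "skew_of M (range_stat \<rho> n (X n)) = 2 * s3 (n - 1) / s2 (n - 1) powr (3 / 2)" if n: "2 \<le> n" for n
  proof -
    interpret S: pareto_sample M "X n" n \<nu> \<beta> by (rule loc[OF n])
    show ?thesis using S.skew[OF \<rho>] .
  qed
  have Dg: "Digamma (real n) + euler_mascheroni = harm (n - 1)" if n: "2 \<le> n" for n
    using Digamma_nat[of "n - 1"] n by (simp add: Suc_diff_1 del: of_nat_Suc)
  have Pg1: "pi\<^sup>2 / 6 - Polygamma 1 (real n) = s2 (n - 1)" if n: "2 \<le> n" for n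
  proof -
    obtain k where k: "n = Suc k" using n by (cases n) auto
    show ?thesis unfolding k using Polygamma1_nat[of k] by simp
  qed
  have Pg2: "2 * zeta3 + Polygamma 2 (real n) = 2 * s3 (n - 1)" if n: "2 \<le> n" for n
  proof -
    obtain k where k: "n = Suc k" using n by (cases n) auto
    show ?thesis unfolding k using Polygamma2_nat[of k] by simp
  qed
  have c2: "c\<^sup>2 = \<beta>\<^sup>2 * (ln \<rho>)\<^sup>2" unfolding c_def by (simp add: power_mult_distrib)
  have P1: "\<forall>n\<ge>2. \<forall>t::real. t < \<beta> * ln \<rho> \<longrightarrow>
        integrable M (\<lambda>\<omega>. exp (t * range_stat \<rho> n (X n) \<omega>)) \<and>
        (\<integral>\<omega>. exp (t * range_stat \<rho> n (X n) \<omega>) \<partial>M)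
          = (real n - 1) * exp t * Beta (1 - t / (\<beta> * ln \<rho>)) (real n - 1)"
  proof (intro allI impI)
    fix n :: nat and t :: real
    assume n: "2 \<le> n" and t: "t < \<beta> * ln \<rho>"
    interpret S: pareto_sample M "X n" n \<nu> \<beta> by (rule loc[OF n])
    have t': "t < S.c \<rho>" using t by (simp add: S.c_eq[OF \<rho>])
    show "integrable M (\<lambda>\<omega>. exp (t * range_stat \<rho> n (X n) \<omega>)) \<and>
        (\<integral>\<omega>. exp (t * range_stat \<rho> n (X n) \<omega>) \<partial>M)
          = (real n - 1) * exp t * Beta (1 - t / (\<beta> * ln \<rho>)) (real n - 1)"
      using S.mgf[OF \<rho> t'] by (simp add: S.c_eq[OF \<rho>])
  qed
  have P2: "\<forall>n\<ge>2. integrable M (range_stat \<rho> n (X n)) \<and>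
        (\<integral>\<omega>. range_stat \<rho> n (X n) \<omega> \<partial>M)
          = 1 + (Digamma (real n) + euler_mascheroni) / (\<beta> * ln \<rho>)"
  proof (intro allI impI conjI)
    fix n :: nat assume n: "2 \<le> n"
    interpret S: pareto_sample M "X n" n \<nu> \<beta> by (rule loc[OF n])
    show "integrable M (range_stat \<rho> n (X n))" using S.mean(1)[OF \<rho>] .
    show "(\<integral>\<omega>. range_stat \<rho> n (X n) \<omega> \<partial>M) = 1 + (Digamma (real n) + euler_mascheroni) / (\<beta> * ln \<rho>)"
      using mean_eq[OF n] Dg[OF n] unfolding c_def by simp
  qed
  have P3: "\<forall>n\<ge>2. var_of M (range_stat \<rho> n (X n))
          = (pi\<^sup>2 / 6 - Polygamma 1 (real n)) / (\<beta>\<^sup>2 * (ln \<rho>)\<^sup>2)"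
    using var_eq Pg1 c2 by simp
  have P4: "\<forall>n\<ge>2. skew_of M (range_stat \<rho> n (X n))
          = (2 * zeta3 + Polygamma 2 (real n)) / (pi\<^sup>2 / 6 - Polygamma 1 (real n)) powr (3/2)"
    using skew_eq Pg1 Pg2 by simp
  have ev2: "eventually (\<lambda>n::nat. 2 \<le> n) sequentially" by (rule eventually_ge_at_top)
  have A1: "(\<lambda>n. \<integral>\<omega>. range_stat \<rho> n (X n) \<omega> \<partial>M) \<sim>[at_top] (\<lambda>n. ln (real n) / (\<beta> * ln \<rho>))"
  proof -
    have "(\<lambda>n. 1 + harm (n - 1) / c) \<sim>[at_top] (\<lambda>n. ln (real n) / c)"
      by (rule asymp_equivI') (rule mean_lim[OF c_pos])
    moreover have "eventually (\<lambda>n. 1 + harm (n - 1) / c = (\<integral>\<omega>. range_stat \<rho> n (X n) \<omega> \<partial>M)) sequentially"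
      using ev2 by eventually_elim (simp add: mean_eq)
    moreover have "eventually (\<lambda>n. ln (real n) / c = ln (real n) / (\<beta> * ln \<rho>)) sequentially"
      by (simp add: c_def)
    ultimately show ?thesis by (rule asymp_equiv_transfer)
  qed
  have A2: "(\<lambda>n. var_of M (range_stat \<rho> n (X n))) \<sim>[at_top] (\<lambda>n. pi\<^sup>2 / (6 * \<beta>\<^sup>2 * (ln \<rho>)\<^sup>2))"
  proof -
    have "(\<lambda>n. s2 (n + 1 - 1) / c\<^sup>2) \<longlonglongrightarrow> (pi\<^sup>2 / 6) / c\<^sup>2"
      using tendsto_divide[OF s2_lim tendsto_const, of "c\<^sup>2"] c_pos by simp
    then have "(\<lambda>n. s2 (n - 1) / c\<^sup>2) \<longlonglongrightarrow> (pi\<^sup>2 / 6) / c\<^sup>2"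
      by (rule LIMSEQ_offset)
    then have "(\<lambda>n. s2 (n - 1) / c\<^sup>2) \<sim>[at_top] (\<lambda>_. (pi\<^sup>2 / 6) / c\<^sup>2)"
      by (rule tendsto_imp_asymp_equiv_const) (use c_pos in simp)
    moreover have "eventually (\<lambda>n. s2 (n - 1) / c\<^sup>2 = var_of M (range_stat \<rho> n (X n))) sequentially"
      using ev2 by eventually_elim (simp add: var_eq)
    moreover have "eventually (\<lambda>n. (pi\<^sup>2 / 6) / c\<^sup>2 = pi\<^sup>2 / (6 * \<beta>\<^sup>2 * (ln \<rho>)\<^sup>2)) sequentially"
      by (simp add: c2 field_simps)
    ultimately show ?thesis by (rule asymp_equiv_transfer)
  qed
  have A3: "(\<lambda>n. skew_of M (range_stat \<rho> n (X n))) \<sim>[at_top] (\<lambda>n. 12 * sqrt 6 * zeta3 / pi ^ 3)"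
  proof -
    have pp: "(pi\<^sup>2 / 6) powr (3 / 2) \<noteq> 0" by simp
    have "(\<lambda>n. 2 * s3 (n + 1 - 1) / s2 (n + 1 - 1) powr (3 / 2)) \<longlonglongrightarrow> 2 * zeta3 / (pi\<^sup>2 / 6) powr (3 / 2)"
      using tendsto_divide[OF tendsto_mult[OF tendsto_const s3_lim]
          tendsto_powr[OF s2_lim tendsto_const] pp, of 2] by simp
    then have "(\<lambda>n. 2 * s3 (n - 1) / s2 (n - 1) powr (3 / 2)) \<longlonglongrightarrow> 12 * sqrt 6 * zeta3 / pi ^ 3"
      unfolding skew_const by (rule LIMSEQ_offset)
    then have "(\<lambda>n. 2 * s3 (n - 1) / s2 (n - 1) powr (3 / 2)) \<sim>[at_top] (\<lambda>_. 12 * sqrt 6 * zeta3 / pi ^ 3)"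
      by (rule tendsto_imp_asymp_equiv_const) (use zeta3_pos in simp)
    moreover have "eventually (\<lambda>n. 2 * s3 (n - 1) / s2 (n - 1) powr (3 / 2) = skew_of M (range_stat \<rho> n (X n))) sequentially"
      using ev2 by eventually_elim (simp add: skew_eq)
    moreover have "eventually (\<lambda>n::nat. 12 * sqrt 6 * zeta3 / pi ^ 3 = 12 * sqrt 6 * zeta3 / pi ^ 3) sequentially"
      by simp
    ultimately show ?thesis by (rule asymp_equiv_transfer)
  qed
  show ?thesis using P1 P2 P3 P4 A1 A2 A3 by blast
qed

end
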